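(* Let \(e^{zN}.F\) be a nilpotent orbit, and let \(z\) be such that \(e^{zN}.F\in\mathcal M\). Then, with respect to the mixed Hodge structure \((e^{zN}.F,W)\), the Hodge decomposition of \(N\) has the form \[N=N^{-1,1}+N^{0,0}+N^{1,-1}+\Big(\sum_{k>0}N^{-1,1-k}\Big)+\Big(\sum_{k>0}N^{0,-k}\Big),\] i.e. all other Hodge components \(N^{r,s}\) vanish.
   Context: \(V_{\mathbb Q}\) finite-dimensional over \(\mathbb Q\), \(V=V_{\mathbb Q}\otimes\mathbb C\), \(W\) an increasing rational filtration, \(Q=\{Q_k\}\) nondegenerate rational bilinear forms on \(Gr^W_k\) of parity \((-1)^k\); \(\mathcal M\) the set of decreasing filtrations (fixed \(\dim F^p\)) with \((F,W)\) a mixed Hodge structure graded-polarized by \(Q\); \(G_{\mathbb C}\) the automorphisms of \(V\) preserving \(W\) acting on \(Gr^W\) by complex automorphisms of \(Q\), \(\mathfrak g_{\mathbb C}\) its Lie algebra, \(\mathfrak g_{\mathbb R}\) its real elements (defined over \(\mathbb R\)), \(\check{\mathcal M}\) the \(G_{\mathbb C}\)-orbit of \(\mathcal M\). A nilpotent orbit is \(e^{zN}.F\) with \(F\in\check{\mathcal M}\), \(N\in\mathfrak g_{\mathbb R}\) nilpotent and \(N(F^p)\subseteq F^{p-1}\) for all \(p\). Deligne bigrading of a mixed Hodge structure \((F',W)\): unique \(V=\bigoplus I^{p,q}\) with \(F'^p=\bigoplus_{a\ge p}I^{a,b}\), \(W_k=\bigoplus_{a+b\le k}I^{a,b}\), \(\overline{I^{p,q}}\equiv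 I^{q,p}\bmod\bigoplus_{r<q,s<p}I^{r,s}\). The Hodge components \(X^{r,s}\) of \(X\in\mathfrak g_{\mathbb C}\) with respect to \((F',W)\) are its components in \(\mathfrak g^{r,s}_{\mathbb C}\) = elements mapping each \(I^{p,q}\) into \(I^{p+r,q+s}\) (\(\mathfrak g_{\mathbb C}=\bigoplus_{r+s\le0}\mathfrak g^{r,s}_{\mathbb C}\)). *)

theory Defs
  imports "HOL-Analysis.Analysis"
begin

text \<open>Model: V_Q = Q^n (after a choice of basis), V = C^n = complex^'n with the
standard rational structure; endomorphisms of V are n x n complex matrices
acting by (*v). All spans/subspaces/dimensions are complex-linear (vec.*).\<close>


definition cconj :: "(complex ^ ('n::finite)) \<Rightarrow> (complex ^ ('n::finite))" where
  "cconj v = (\<chi> i. cnj (v $ i))"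

definition rational_vec :: "(complex ^ ('n::finite)) \<Rightarrow> bool" where
  "rational_vec v \<longleftrightarrow> (\<forall>i. v $ i \<in> \<rat>)"

definition rational_subspace :: "(complex ^ ('n::finite)) set \<Rightarrow> bool" where
  "rational_subspace S \<longleftrightarrow> vec.subspace S \<and> S = vec.span {v \<in> S. rational_vec v}"

definition real_end :: "(complex ^ ('n::finite) ^ 'n) \<Rightarrow> bool" where
  "real_end X \<longleftrightarrow> (\<forall>i j. X $ i $ j \<in> \<real>)"

definition set_plus :: "(complex ^ ('n::finite)) set \<Rightarrow> (complex ^ ('n::finite)) set \<Rightarrow> (complex ^ ('n::finite)) set" where
  "set_plus A B = {a + b | a b. a \<in> A \<and> b \<in> B}"

fun mpow :: "(complex ^ ('n::finite) ^ 'n) \<Rightarrow> nat \<Rightarrow> (complex ^ ('n::finite) ^ 'n)" where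
  "mpow A 0 = mat 1"
| "mpow A (Suc k) = A ** mpow A k"

definition cscale :: "complex \<Rightarrow> (complex ^ ('n::finite) ^ 'n) \<Rightarrow> (complex ^ ('n::finite) ^ 'n)" where
  "cscale c A = (\<chi> i j. c * A $ i $ j)"

definition nilpotent_end :: "(complex ^ ('n::finite) ^ 'n) \<Rightarrow> bool" where
  "nilpotent_end N \<longleftrightarrow> (\<exists>k. mpow N k = 0)"

text \<open>Exponential of a nilpotent endomorphism (N^n = 0 on an n-dimensional space,
so the exponential series is this finite sum).\<close>
definition nexp :: "(complex ^ ('n::finite) ^ 'n) \<Rightarrow> (complex ^ ('n::finite) ^ 'n)" where
  "nexp N = (\<Sum>k\<le>CARD('n). cscale (1 / of_nat (fact k)) (mpow N k))"

text \<open>Filtrations are indexed by int.\<close>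
definition incr_filtration :: "(int \<Rightarrow> (complex ^ ('n::finite)) set) \<Rightarrow> bool" where
  "incr_filtration W \<longleftrightarrow> (\<forall>k. vec.subspace (W k) \<and> W k \<subseteq> W (k + 1))
     \<and> (\<exists>a. W a = {0}) \<and> (\<exists>b. W b = UNIV)"

definition decr_filtration :: "(int \<Rightarrow> (complex ^ ('n::finite)) set) \<Rightarrow> bool" where
  "decr_filtration F \<longleftrightarrow> (\<forall>p. vec.subspace (F p) \<and> F (p + 1) \<subseteq> F p)
     \<and> (\<exists>a. F a = UNIV) \<and> (\<exists>b. F b = {0})"

definition rational_incr_filtration :: "(int \<Rightarrow> (complex ^ ('n::finite)) set) \<Rightarrow> bool" where
  "rational_incr_filtration W \<longleftrightarrow> incr_filtration W \<and> (\<forall>k. rational_subspace (W k))"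

text \<open>A complex bilinear form on V; Q k is viewed as a form on Gr^W_k = W_k/W_{k-1}
by requiring that W_{k-1} lies in its radical (restricted to W_k).\<close>
definition bilinear_c :: "((complex ^ ('n::finite)) \<Rightarrow> (complex ^ ('n::finite)) \<Rightarrow> complex) \<Rightarrow> bool" where
  "bilinear_c B \<longleftrightarrow> (\<forall>u u' v. B (u + u') v = B u v + B u' v)
     \<and> (\<forall>u v v'. B u (v + v') = B u v + B u v')
     \<and> (\<forall>c u v. B (c *s u) v = c * B u v) \<and> (\<forall>c u v. B u (c *s v) = c * B u v)"

definition graded_forms :: "(int \<Rightarrow> (complex ^ ('n::finite)) set) \<Rightarrow> (int \<Rightarrow> (complex ^ ('n::finite)) \<Rightarrow> (complex ^ ('n::finite)) \<Rightarrow> complex) \<Rightarrow> bool" where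
  "graded_forms W Q \<longleftrightarrow> (\<forall>k.
      bilinear_c (Q k)
    \<and> (\<forall>u\<in>W (k - 1). \<forall>v\<in>W k. Q k u v = 0 \<and> Q k v u = 0)
    \<and> (\<forall>u\<in>W k. \<forall>v\<in>W k. Q k v u = (-1) ^ nat \<bar>k\<bar> * Q k u v)
    \<and> (\<forall>u\<in>W k. \<forall>v\<in>W k. rational_vec u \<longrightarrow> rational_vec v \<longrightarrow> Q k u v \<in> \<rat>)
    \<and> (\<forall>u\<in>W k. (\<forall>v\<in>W k. Q k u v = 0) \<longrightarrow> u \<in> W (k - 1)))"

text \<open>Hodge filtration induced on Gr^W_k, pulled back to W_k (it contains W_{k-1}).\<close>
definition grF :: "(int \<Rightarrow> (complex ^ ('n::finite)) set) \<Rightarrow> (int \<Rightarrow> (complex ^ ('n::finite)) set) \<Rightarrow> int \<Rightarrow> int \<Rightarrow> (complex ^ ('n::finite)) set" where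
  "grF F W k p = set_plus (F p \<inter> W k) (W (k - 1))"

text \<open>(F,W) is a mixed Hodge structure: F induces a pure Hodge structure of weight k on
each Gr^W_k, i.e. Gr_k = F^p Gr_k (+) conj(F^{k-p+1} Gr_k) for all p.\<close>
definition is_MHS :: "(int \<Rightarrow> (complex ^ ('n::finite)) set) \<Rightarrow> (int \<Rightarrow> (complex ^ ('n::finite)) set) \<Rightarrow> bool" where
  "is_MHS F W \<longleftrightarrow> decr_filtration F \<and> rational_incr_filtration W \<and>
     (\<forall>k p. set_plus (grF F W k p) (cconj ` grF F W k (k - p + 1)) = W k
          \<and> grF F W k p \<inter> cconj ` grF F W k (k - p + 1) = W (k - 1))"

text \<open>Graded polarization: on Gr_k, Q_k(F^p, F^{k-p+1}) = 0 and
i^{p-q} Q_k(v, conj v) > 0 for nonzero v in H^{p,q} = F^p \<inter> conj F^q, p+q=k.\<close>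
definition graded_polarized_MHS ::
  "(int \<Rightarrow> (complex ^ ('n::finite)) set) \<Rightarrow> (int \<Rightarrow> (complex ^ ('n::finite)) set) \<Rightarrow> (int \<Rightarrow> (complex ^ ('n::finite)) \<Rightarrow> (complex ^ ('n::finite)) \<Rightarrow> complex) \<Rightarrow> bool" where
  "graded_polarized_MHS F W Q \<longleftrightarrow> is_MHS F W \<and> graded_forms W Q \<and>
     (\<forall>k p. \<forall>u\<in>F p \<inter> W k. \<forall>v\<in>F (k - p + 1) \<inter> W k. Q k u v = 0) \<and>
     (\<forall>k p q v. p + q = k \<longrightarrow> v \<in> grF F W k p \<inter> cconj ` grF F W k q \<longrightarrow> v \<notin> W (k - 1) \<longrightarrow>
        \<i> powi (p - q) * Q k v (cconj v) \<in> \<real> \<and> Re (\<i> powi (p - q) * Q k v (cconj v)) > 0)"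

text \<open>The classifying space M (fixed Hodge numbers d p = dim F^p).\<close>
definition Mcal :: "(int \<Rightarrow> (complex ^ ('n::finite)) set) \<Rightarrow> (int \<Rightarrow> (complex ^ ('n::finite)) \<Rightarrow> (complex ^ ('n::finite)) \<Rightarrow> complex) \<Rightarrow> (int \<Rightarrow> nat)
     \<Rightarrow> (int \<Rightarrow> (complex ^ ('n::finite)) set) set" where
  "Mcal W Q d = {F. (\<forall>p. vec.dim (F p) = d p) \<and> graded_polarized_MHS F W Q}"

text \<open>G_C: automorphisms of V preserving W and acting on each Gr^W_k by automorphisms of Q_k.\<close>
definition GC :: "(int \<Rightarrow> (complex ^ ('n::finite)) set) \<Rightarrow> (int \<Rightarrow> (complex ^ ('n::finite)) \<Rightarrow> (complex ^ ('n::finite)) \<Rightarrow> complex) \<Rightarrow> (complex ^ ('n::finite) ^ 'n) set" where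
  "GC W Q = {g. invertible g \<and> (\<forall>k. (*v) g ` W k = W k) \<and>
     (\<forall>k. \<forall>u\<in>W k. \<forall>v\<in>W k. Q k (g *v u) (g *v v) = Q k u v)}"

text \<open>Its Lie algebra g_C and the real form g_R.\<close>
definition gC :: "(int \<Rightarrow> (complex ^ ('n::finite)) set) \<Rightarrow> (int \<Rightarrow> (complex ^ ('n::finite)) \<Rightarrow> (complex ^ ('n::finite)) \<Rightarrow> complex) \<Rightarrow> (complex ^ ('n::finite) ^ 'n) set" where
  "gC W Q = {X. (\<forall>k. (*v) X ` W k \<subseteq> W k) \<and>
     (\<forall>k. \<forall>u\<in>W k. \<forall>v\<in>W k. Q k (X *v u) v + Q k u (X *v v) = 0)}"

definition gR :: "(int \<Rightarrow> (complex ^ ('n::finite)) set) \<Rightarrow> (int \<Rightarrow> (complex ^ ('n::finite)) \<Rightarrow> (complex ^ ('n::finite)) \<Rightarrow> complex) \<Rightarrow> (complex ^ ('n::finite) ^ 'n) set" where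
  "gR W Q = {X \<in> gC W Q. real_end X}"

definition act :: "(complex ^ ('n::finite) ^ 'n) \<Rightarrow> (int \<Rightarrow> (complex ^ ('n::finite)) set) \<Rightarrow> (int \<Rightarrow> (complex ^ ('n::finite)) set)" (infixr "\<cdot>" 75) where
  "g \<cdot> F = (\<lambda>p. (*v) g ` F p)"

definition Mcheck :: "(int \<Rightarrow> (complex ^ ('n::finite)) set) \<Rightarrow> (int \<Rightarrow> (complex ^ ('n::finite)) \<Rightarrow> (complex ^ ('n::finite)) \<Rightarrow> complex) \<Rightarrow> (int \<Rightarrow> nat)
     \<Rightarrow> (int \<Rightarrow> (complex ^ ('n::finite)) set) set" where
  "Mcheck W Q d = {g \<cdot> F | g F. g \<in> GC W Q \<and> F \<in> Mcal W Q d}"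

definition nilpotent_orbit_data ::
  "(int \<Rightarrow> (complex ^ ('n::finite)) set) \<Rightarrow> (int \<Rightarrow> (complex ^ ('n::finite)) \<Rightarrow> (complex ^ ('n::finite)) \<Rightarrow> complex) \<Rightarrow> (int \<Rightarrow> nat)
    \<Rightarrow> (int \<Rightarrow> (complex ^ ('n::finite)) set) \<Rightarrow> (complex ^ ('n::finite) ^ 'n) \<Rightarrow> bool" where
  "nilpotent_orbit_data W Q d F N \<longleftrightarrow> F \<in> Mcheck W Q d \<and> N \<in> gR W Q \<and> nilpotent_end N
     \<and> (\<forall>p. (*v) N ` F p \<subseteq> F (p - 1))"

text \<open>Direct sum decomposition V = (+) I^{p,q} with finitely many nonzero summands.\<close>
definition bigr_support :: "(int \<Rightarrow> int \<Rightarrow> (complex ^ ('n::finite)) set) \<Rightarrow> (int \<times> int) set" where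
  "bigr_support I = {(p, q). I p q \<noteq> {0}}"

definition bigr_decomp :: "(int \<Rightarrow> int \<Rightarrow> (complex ^ ('n::finite)) set) \<Rightarrow> (complex ^ ('n::finite)) \<Rightarrow> (int \<times> int \<Rightarrow> (complex ^ ('n::finite))) \<Rightarrow> bool" where
  "bigr_decomp I v c \<longleftrightarrow> (\<forall>p q. c (p, q) \<in> I p q) \<and> (\<forall>pq. pq \<notin> bigr_support I \<longrightarrow> c pq = 0)
     \<and> v = (\<Sum>pq\<in>bigr_support I. c pq)"

definition is_direct_bigrading :: "(int \<Rightarrow> int \<Rightarrow> (complex ^ ('n::finite)) set) \<Rightarrow> bool" where
  "is_direct_bigrading I \<longleftrightarrow> (\<forall>p q. vec.subspace (I p q)) \<and> finite (bigr_support I)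
     \<and> (\<forall>v. \<exists>!c. bigr_decomp I v c)"

definition is_deligne_bigrading ::
  "(int \<Rightarrow> (complex ^ ('n::finite)) set) \<Rightarrow> (int \<Rightarrow> (complex ^ ('n::finite)) set) \<Rightarrow> (int \<Rightarrow> int \<Rightarrow> (complex ^ ('n::finite)) set) \<Rightarrow> bool" where
  "is_deligne_bigrading F W I \<longleftrightarrow> is_direct_bigrading I
     \<and> (\<forall>p. F p = vec.span (\<Union>{I a b | a b. a \<ge> p}))
     \<and> (\<forall>k. W k = vec.span (\<Union>{I a b | a b. a + b \<le> k}))
     \<and> (\<forall>p q. cconj ` I p q \<subseteq> set_plus (I q p) (vec.span (\<Union>{I r s | r s. r < q \<and> s < p})))"

definition deligne_I :: "(int \<Rightarrow> (complex ^ ('n::finite)) set) \<Rightarrow> (int \<Rightarrow> (complex ^ ('n::finite)) set) \<Rightarrow> int \<Rightarrow> int \<Rightarrow> (complex ^ ('n::finite)) set" where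
  "deligne_I F W = (THE I. is_deligne_bigrading F W I)"

text \<open>Projection onto I^{p,q} along the other summands.\<close>
definition bigr_proj :: "(int \<Rightarrow> int \<Rightarrow> (complex ^ ('n::finite)) set) \<Rightarrow> int \<Rightarrow> int \<Rightarrow> (complex ^ ('n::finite)) \<Rightarrow> (complex ^ ('n::finite))" where
  "bigr_proj I p q v = (THE c. bigr_decomp I v c) (p, q)"

text \<open>Hodge component X^{r,s} of X w.r.t. (F,W): X^{r,s} = sum_{p,q} pi_{p+r,q+s} X pi_{p,q},
as a linear map V \<rightarrow> V.\<close>
definition hodge_component ::
  "(int \<Rightarrow> (complex ^ ('n::finite)) set) \<Rightarrow> (int \<Rightarrow> (complex ^ ('n::finite)) set) \<Rightarrow> (complex ^ ('n::finite) ^ 'n) \<Rightarrow> int \<Rightarrow> int \<Rightarrow> (complex ^ ('n::finite)) \<Rightarrow> (complex ^ ('n::finite))" where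
  "hodge_component F W X r s v =
     (let I = deligne_I F W in
      \<Sum>pq\<in>bigr_support I. bigr_proj I (fst pq + r) (snd pq + s) (X *v bigr_proj I (fst pq) (snd pq) v))"

end

theory Submission
  imports Defs
begin



lemma cconj_nth[simp]: "cconj v $ i = cnj (v $ i)"
  by (simp add: cconj_def)

lemma cconj_add[simp]: "cconj (x + y) = cconj x + cconj y"
  by (simp add: cconj_def vec_eq_iff)
lemma cconj_diff[simp]: "cconj (x - y) = cconj x - cconj y"
  by (simp add: cconj_def vec_eq_iff)
lemma cconj_minus[simp]: "cconj (- x) = - cconj x"
  by (simp add: cconj_def vec_eq_iff)
lemma cconj_zero[simp]: "cconj 0 = 0"
  by (simp add: cconj_def vec_eq_iff)
lemma cconj_cconj[simp]: "cconj (cconj x) = x"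
  by (simp add: cconj_def vec_eq_iff)
lemma cconj_scale[simp]: "cconj (c *s x) = cnj c *s cconj x"
  by (simp add: cconj_def vec_eq_iff)
lemma cconj_eq_iff[simp]: "cconj x = cconj y \<longleftrightarrow> x = y"
  by (metis cconj_cconj)
lemma cconj_eq0_iff[simp]: "cconj x = 0 \<longleftrightarrow> x = 0"
  by (metis cconj_cconj cconj_zero)
lemma cconj_sum: "cconj (sum f A) = sum (\<lambda>i. cconj (f i)) A"
  by (induction A rule: infinite_finite_induct) auto

lemma inj_cconj: "inj cconj"
  by (rule injI) simp

lemma cconj_image_Int: "cconj ` (A \<inter> B) = cconj ` A \<inter> cconj ` B"
  by (rule image_Int[OF inj_cconj])

lemma cconj_mem_image: "cconj x \<in> cconj ` A \<longleftrightarrow> x \<in> A"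
  by (auto simp: image_iff)

lemma mem_cconj_image: "x \<in> cconj ` A \<longleftrightarrow> cconj x \<in> A"
  by (metis cconj_cconj cconj_mem_image)

lemma subspace_cconj: "vec.subspace S \<Longrightarrow> vec.subspace (cconj ` S)"
  unfolding vec.subspace_def
  by (auto simp: mem_cconj_image)

lemma cconj_span: "cconj ` vec.span S \<subseteq> vec.span (cconj ` S)"
proof
  fix y assume "y \<in> cconj ` vec.span S"
  then obtain x where x: "x \<in> vec.span S" "y = cconj x" by auto
  have "cconj x \<in> vec.span (cconj ` S)"
  proof (rule vec.span_induct[where P="\<lambda>x. cconj x \<in> vec.span (cconj ` S)", OF x(1)])
    show "vec.subspace {x. cconj x \<in> vec.span (cconj ` S)}"
      unfolding vec.subspace_def
      by (auto intro: vec.span_add vec.span_scale vec.span_zero)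
    show "\<And>x. x \<in> S \<Longrightarrow> cconj x \<in> vec.span (cconj ` S)"
      by (auto intro: vec.span_superset[THEN subsetD])
  qed
  then show "y \<in> vec.span (cconj ` S)" using x by simp
qed

lemma Rats_Reals_c: "(x::complex) \<in> \<rat> \<Longrightarrow> x \<in> \<real>"
  by (erule Rats_cases') (simp add: Reals_cnj_iff)

lemma rational_cconj: "rational_vec v \<Longrightarrow> cconj v = v"
  unfolding rational_vec_def
  by (simp add: vec_eq_iff Reals_cnj_iff[symmetric] Rats_Reals_c)

lemma cconj_rational_subspace: "rational_subspace S \<Longrightarrow> cconj ` S = S"
proof -
  assume rs: "rational_subspace S"
  let ?R = "{v \<in> S. rational_vec v}"
  have S: "S = vec.span ?R" "vec.subspace S" using rs unfolding rational_subspace_def by auto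
  have R: "cconj ` ?R = ?R" using rational_cconj by (force simp: image_iff)
  have 1: "cconj ` S \<subseteq> S"
    using cconj_span[of ?R] R S by simp
  have "S \<subseteq> cconj ` S"
  proof
    fix x assume "x \<in> S"
    then have "cconj x \<in> S" using 1 by auto
    then show "x \<in> cconj ` S" by (simp add: mem_cconj_image)
  qed
  with 1 show ?thesis by auto
qed

lemma real_end_cconj: "real_end N \<Longrightarrow> cconj (N *v x) = N *v cconj x"
  unfolding real_end_def
  by (simp add: vec_eq_iff matrix_vector_mult_def cconj_def Reals_cnj_iff)

lemma set_plus_iff: "x \<in> set_plus A B \<longleftrightarrow> (\<exists>a\<in>A. \<exists>b\<in>B. x = a + b)"
  unfolding set_plus_def by auto

lemma set_plus_memI: "a \<in> A \<Longrightarrow> b \<in> B \<Longrightarrow> a + b \<in> set_plus A B"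
  unfolding set_plus_def by blast

lemma subspace_set_plus: "vec.subspace A \<Longrightarrow> vec.subspace B \<Longrightarrow> vec.subspace (set_plus A B)"
  unfolding set_plus_def by (rule vec.subspace_sums)

lemma set_plus_sub_span: "A \<subseteq> vec.span C \<Longrightarrow> B \<subseteq> vec.span C \<Longrightarrow> set_plus A B \<subseteq> vec.span C"
  unfolding set_plus_def by (auto intro: vec.span_add)

lemma set_plus_sub: "vec.subspace C \<Longrightarrow> A \<subseteq> C \<Longrightarrow> B \<subseteq> C \<Longrightarrow> set_plus A B \<subseteq> C"
  unfolding set_plus_def by (auto intro: vec.subspace_add)

lemma cconj_set_plus: "cconj ` set_plus A B = set_plus (cconj ` A) (cconj ` B)"
  unfolding set_plus_def by (force simp: image_iff)

text \<open>commutation of matrices\<close>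
definition commutes :: "complex ^ 'n ^ 'n \<Rightarrow> complex ^ 'n ^ 'n \<Rightarrow> bool" where
  "commutes X A \<longleftrightarrow> X ** A = A ** X"

lemma commutes_mult: "commutes X A \<Longrightarrow> commutes X B \<Longrightarrow> commutes X (A ** B)"
  unfolding commutes_def by (metis matrix_mul_assoc)

lemma commutes_one: "commutes X (mat 1)"
  unfolding commutes_def by simp

lemma mult_cscale_right: "X ** cscale c A = cscale c (X ** A)"
  unfolding cscale_def matrix_matrix_mult_def
  by (simp add: vec_eq_iff sum_distrib_left mult.left_commute)

lemma mult_cscale_left: "cscale c A ** X = cscale c (A ** X)"
  unfolding cscale_def matrix_matrix_mult_def
  by (simp add: vec_eq_iff sum_distrib_left mult.assoc)

lemma commutes_cscale: "commutes X A \<Longrightarrow> commutes X (cscale c A)"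
  unfolding commutes_def by (simp add: mult_cscale_right mult_cscale_left)

lemma matrix_add_rdistrib': "((B + C) ** A) = (B ** A) + (C ** A)"
  by (vector matrix_matrix_mult_def sum.distrib[symmetric] field_simps)

lemma commutes_add: "commutes X A \<Longrightarrow> commutes X B \<Longrightarrow> commutes X (A + B)"
  unfolding commutes_def by (simp add: matrix_add_ldistrib matrix_add_rdistrib')

lemma commutes_zero: "commutes X 0"
  unfolding commutes_def by simp

lemma commutes_sum: "(\<And>i. i \<in> S \<Longrightarrow> commutes X (f i)) \<Longrightarrow> commutes X (sum f S)"
  by (induction S rule: infinite_finite_induct) (auto intro: commutes_add commutes_zero)

lemma commutes_mpow: "commutes X A \<Longrightarrow> commutes X (mpow A k)"
  by (induction k) (auto intro: commutes_mult commutes_one)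

lemma commutes_nexp: "commutes N (nexp (cscale z N))"
  unfolding nexp_def
  by (intro commutes_sum commutes_cscale commutes_mpow) (simp add: commutes_def)




context
  fixes I :: "int \<Rightarrow> int \<Rightarrow> (complex ^ 'n) set"
  assumes dir: "is_direct_bigrading I"
begin

lemma I_sub: "vec.subspace (I p q)"
  using dir unfolding is_direct_bigrading_def by auto

lemma I_zero: "0 \<in> I p q"
  using I_sub vec.subspace_0 by blast

lemma fin_supp: "finite (bigr_support I)"
  using dir unfolding is_direct_bigrading_def by auto

lemma decomp_the: "bigr_decomp I v (THE c. bigr_decomp I v c)"
  using dir unfolding is_direct_bigrading_def by (metis theI')

lemma proj_unique: "bigr_decomp I v c \<Longrightarrow> bigr_proj I p q v = c (p, q)"
  using dir decomp_the[of v] unfolding is_direct_bigrading_def bigr_proj_def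
  by metis

lemma proj_mem: "bigr_proj I p q v \<in> I p q"
  using decomp_the[of v] unfolding bigr_decomp_def bigr_proj_def by auto

lemma proj_sum: "v = (\<Sum>i\<in>bigr_support I. bigr_proj I (fst i) (snd i) v)"
  using decomp_the[of v] unfolding bigr_decomp_def bigr_proj_def by auto

lemma proj_outside: "(p, q) \<notin> bigr_support I \<Longrightarrow> bigr_proj I p q v = 0"
  using decomp_the[of v] unfolding bigr_decomp_def bigr_proj_def by auto

lemma proj_add: "bigr_proj I p q (x + y) = bigr_proj I p q x + bigr_proj I p q y"
proof -
  let ?c = "\<lambda>i. bigr_proj I (fst i) (snd i) x + bigr_proj I (fst i) (snd i) y"
  have "bigr_decomp I (x + y) ?c"
    unfolding bigr_decomp_def
  proof (intro conjI allI impI)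
    show "?c (p, q) \<in> I p q" for p q
      by (simp add: proj_mem I_sub vec.subspace_add)
    show "pq \<notin> bigr_support I \<Longrightarrow> ?c pq = 0" for pq
      using proj_outside[of "fst pq" "snd pq"] by auto
    show "x + y = sum ?c (bigr_support I)"
      using proj_sum[of x] proj_sum[of y] by (simp add: sum.distrib)
  qed
  then show ?thesis using proj_unique by simp
qed

lemma proj_scale: "bigr_proj I p q (a *s x) = a *s bigr_proj I p q x"
proof -
  let ?c = "\<lambda>i. a *s bigr_proj I (fst i) (snd i) x"
  have "bigr_decomp I (a *s x) ?c"
    unfolding bigr_decomp_def
  proof (intro conjI allI impI)
    show "?c (p, q) \<in> I p q" for p q
      by (simp add: proj_mem I_sub vec.subspace_scale)
    show "pq \<notin> bigr_support I \<Longrightarrow> ?c pq = 0" for pq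
      using proj_outside[of "fst pq" "snd pq"] by auto
    show "a *s x = sum ?c (bigr_support I)"
      using proj_sum[of x] by (metis (no_types, lifting) sum.cong vec.scale_sum_right)
  qed
  then show ?thesis using proj_unique by simp
qed

lemma proj_self: "x \<in> I a b \<Longrightarrow> bigr_proj I p q x = (if (p, q) = (a, b) then x else 0)"
proof -
  assume x: "x \<in> I a b"
  let ?c = "\<lambda>i. if i = (a, b) then x else 0"
  have "bigr_decomp I x ?c"
    unfolding bigr_decomp_def
  proof (intro conjI allI impI)
    show "?c (p, q) \<in> I p q" for p q
      using x I_zero by auto
    show "pq \<notin> bigr_support I \<Longrightarrow> ?c pq = 0" for pq
      using x unfolding bigr_support_def by auto
    show "x = sum ?c (bigr_support I)"
      using x fin_supp unfolding bigr_support_def by (auto simp: sum.delta')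
  qed
  then show ?thesis using proj_unique by simp
qed

lemma proj_zero: "bigr_proj I p q 0 = 0"
  using proj_self[OF I_zero, of p q p q] by simp

lemma proj_sum_lin: "bigr_proj I p q (sum f A) = sum (\<lambda>i. bigr_proj I p q (f i)) A"
  by (induction A rule: infinite_finite_induct) (auto simp: proj_zero proj_add)

lemma proj_span:
  assumes "v \<in> vec.span (\<Union>{I a b | a b. P a b})" "\<not> P p q"
  shows "bigr_proj I p q v = 0"
proof -
  have "\<forall>p q. \<not> P p q \<longrightarrow> bigr_proj I p q v = 0"
  proof (rule vec.span_induct[where P="\<lambda>v. \<forall>p q. \<not> P p q \<longrightarrow> bigr_proj I p q v = 0", OF assms(1)])
    show "vec.subspace {v. \<forall>p q. \<not> P p q \<longrightarrow> bigr_proj I p q v = 0}"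
      unfolding vec.subspace_def by (auto simp: proj_add proj_scale proj_zero)
    show "\<And>x. x \<in> \<Union>{I a b | a b. P a b} \<Longrightarrow> \<forall>p q. \<not> P p q \<longrightarrow> bigr_proj I p q x = 0"
      using proj_self by fastforce
  qed
  then show ?thesis using assms(2) by blast
qed

lemma span_from_proj:
  assumes "\<And>a b. bigr_proj I a b v \<noteq> 0 \<Longrightarrow> P a b"
  shows "v \<in> vec.span (\<Union>{I a b | a b. P a b})"
proof -
  have "(\<Sum>i\<in>bigr_support I. bigr_proj I (fst i) (snd i) v) \<in> vec.span (\<Union>{I a b | a b. P a b})"
  proof (rule vec.span_sum)
    fix i
    show "bigr_proj I (fst i) (snd i) v \<in> vec.span (\<Union>{I a b | a b. P a b})"
    proof (cases "bigr_proj I (fst i) (snd i) v = 0")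
      case True then show ?thesis by (simp add: vec.span_zero)
    next
      case False
      then have "bigr_proj I (fst i) (snd i) v \<in> \<Union>{I a b | a b. P a b}"
        using assms proj_mem by blast
      then show ?thesis by (rule vec.span_superset[THEN subsetD])
    qed
  qed
  then show ?thesis using proj_sum[of v] by simp
qed

lemma span_single: "vec.span (\<Union>{I a b | a b. (a, b) = (p, q)}) = I p q"
proof -
  have "\<Union>{I a b | a b. (a, b) = (p, q)} = I p q" by auto
  then show ?thesis using I_sub vec.span_eq_iff by simp
qed

end




lemma int_induct_from:
  fixes P :: "int \<Rightarrow> bool"
  assumes base: "\<And>k. k \<le> a \<Longrightarrow> P k" and step: "\<And>k. P (k - 1) \<Longrightarrow> P k"
  shows "P k"
proof -
  have all: "\<forall>t::nat. P (a + int t)"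
  proof
    fix t :: nat show "P (a + int t)"
    proof (induction t)
      case 0 then show ?case using base by simp
    next
      case (Suc t)
      have "P ((a + int (Suc t)) - 1)" using Suc by simp
      then show ?case by (rule step)
    qed
  qed
  show ?thesis
  proof (cases "k \<le> a")
    case True then show ?thesis using base by simp
  next
    case False
    then have "k = a + int (nat (k - a))" by simp
    then show ?thesis using all by metis
  qed
qed

lemma int_induct_down:
  fixes P :: "int \<Rightarrow> bool"
  assumes base: "\<And>k. b \<le> k \<Longrightarrow> P k" and step: "\<And>k. P (k + 1) \<Longrightarrow> P k"
  shows "P k"
proof -
  have all: "\<forall>t::nat. P (b - int t)"
  proof
    fix t :: nat show "P (b - int t)"
    proof (induction t)
      case 0 then show ?case using base by simp
    next
      case (Suc t)
      have "P ((b - int (Suc t)) + 1)" using Suc by simp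
      then show ?case by (rule step)
    qed
  qed
  show ?thesis
  proof (cases "b \<le> k")
    case True then show ?thesis using base by simp
  next
    case False
    then have "k = b - int (nat (b - k))" by simp
    then show ?thesis using all by metis
  qed
qed

lemma span_union_sum:
  assumes fin: "finite S" and sub: "\<And>i. i \<in> S \<Longrightarrow> vec.subspace (U i)"
    and v: "v \<in> vec.span (\<Union>(U ` S))"
  shows "\<exists>c. (\<forall>i\<in>S. c i \<in> U i) \<and> v = sum c S"
proof (rule vec.span_induct[where P="\<lambda>v. \<exists>c. (\<forall>i\<in>S. c i \<in> U i) \<and> v = sum c S", OF v])
  show "vec.subspace {v. \<exists>c. (\<forall>i\<in>S. c i \<in> U i) \<and> v = sum c S}"
    unfolding vec.subspace_def
  proof (intro conjI ballI allI)
    show "0 \<in> {v. \<exists>c. (\<forall>i\<in>S. c i \<in> U i) \<and> v = sum c S}"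
      using sub vec.subspace_0 by (auto intro!: exI[of _ "\<lambda>i. 0"])
  next
    fix x y assume "x \<in> {v. \<exists>c. (\<forall>i\<in>S. c i \<in> U i) \<and> v = sum c S}"
      "y \<in> {v. \<exists>c. (\<forall>i\<in>S. c i \<in> U i) \<and> v = sum c S}"
    then obtain c1 c2 where c: "\<forall>i\<in>S. c1 i \<in> U i" "x = sum c1 S" "\<forall>i\<in>S. c2 i \<in> U i" "y = sum c2 S"
      by auto
    show "x + y \<in> {v. \<exists>c. (\<forall>i\<in>S. c i \<in> U i) \<and> v = sum c S}"
      using c by (auto simp: sum.distrib intro!: exI[of _ "\<lambda>i. c1 i + c2 i"] vec.subspace_add[OF sub])
  next
    fix a x assume "x \<in> {v. \<exists>c. (\<forall>i\<in>S. c i \<in> U i) \<and> v = sum c S}"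
    then obtain c1 where c: "\<forall>i\<in>S. c1 i \<in> U i" "x = sum c1 S"
      by auto
    show "a *s x \<in> {v. \<exists>c. (\<forall>i\<in>S. c i \<in> U i) \<and> v = sum c S}"
      using c by (auto simp: vec.scale_sum_right intro!: exI[of _ "\<lambda>i. a *s c1 i"] vec.subspace_scale[OF sub])
  qed
  show "\<exists>c. (\<forall>i\<in>S. c i \<in> U i) \<and> x = sum c S" if xU: "x \<in> \<Union>(U ` S)" for x
  proof -
    obtain i0 where i0: "i0 \<in> S" "x \<in> U i0" using xU by auto
    show ?thesis
      by (rule exI[of _ "\<lambda>i. if i = i0 then x else 0"])
         (use i0 sub vec.subspace_0 fin in \<open>auto simp: sum.delta\<close>)
  qed
qed




locale mhs =
  fixes F W :: "int \<Rightarrow> (complex ^ 'n::finite) set"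
  assumes F_sub: "vec.subspace (F p)"
  and F_step: "F (p + 1) \<subseteq> F p"
  and F_top: "\<exists>a. F a = UNIV"
  and F_bot: "\<exists>b. F b = {0}"
  and W_sub: "vec.subspace (W k)"
  and W_step: "W k \<subseteq> W (k + 1)"
  and W_bot: "\<exists>a. W a = {0}"
  and W_top: "\<exists>b. W b = UNIV"
  and W_conj: "cconj ` W k = W k"
  and hodge_sum: "p + q = k + 1 \<Longrightarrow> x \<in> W k \<Longrightarrow>
      \<exists>f g w. f \<in> F p \<inter> W k \<and> g \<in> cconj ` F q \<inter> W k \<and> w \<in> W (k - 1) \<and> x = f + g + w"
  and hodge_int: "p + q = k + 1 \<Longrightarrow> x \<in> F p \<inter> W k \<Longrightarrow> y \<in> cconj ` F q \<inter> W k \<Longrightarrow>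
      x - y \<in> W (k - 1) \<Longrightarrow> x \<in> W (k - 1)"
begin

definition Fb :: "int \<Rightarrow> (complex ^ 'n) set" where
  "Fb q = cconj ` F q"

lemma mem_Fb: "x \<in> Fb q \<longleftrightarrow> cconj x \<in> F q"
  unfolding Fb_def by (rule mem_cconj_image)

lemma Fb_sub: "vec.subspace (Fb q)"
  unfolding Fb_def by (rule subspace_cconj[OF F_sub])

lemma W_conj_mem: "cconj x \<in> W k \<longleftrightarrow> x \<in> W k"
  using W_conj[of k] by (metis mem_cconj_image)

lemma F_anti: "p \<le> p' \<Longrightarrow> F p' \<subseteq> F p"
proof -
  assume "p \<le> p'"
  then obtain t where t: "p' = p + int t" using zle_iff_zadd by blast
  have "F (p + int t) \<subseteq> F p"
  proof (induction t)
    case 0 then show ?case by simp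
  next
    case (Suc t)
    have "F (p + int (Suc t)) = F ((p + int t) + 1)" by (simp add: ac_simps)
    also have "\<dots> \<subseteq> F (p + int t)" by (rule F_step)
    finally show ?case using Suc by blast
  qed
  then show ?thesis using t by simp
qed

lemma W_mono: "k \<le> k' \<Longrightarrow> W k \<subseteq> W k'"
proof -
  assume "k \<le> k'"
  then obtain t where t: "k' = k + int t" using zle_iff_zadd by blast
  have "W k \<subseteq> W (k + int t)"
  proof (induction t)
    case 0 then show ?case by simp
  next
    case (Suc t)
    have "W (k + int t) \<subseteq> W ((k + int t) + 1)" by (rule W_step)
    also have "\<dots> = W (k + int (Suc t))" by (simp add: ac_simps)
    finally show ?case using Suc by blast
  qed
  then show ?thesis using t by simp
qed

lemma Fb_anti: "p \<le> p' \<Longrightarrow> Fb p' \<subseteq> Fb p"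
  unfolding Fb_def using F_anti by blast

lemma W_zero: "0 \<in> W k" using W_sub vec.subspace_0 by blast
lemma F_zero: "0 \<in> F k" using F_sub vec.subspace_0 by blast
lemma Fb_zero: "0 \<in> Fb k" using Fb_sub vec.subspace_0 by blast

lemma W_low: "\<exists>a. \<forall>k\<le>a. W k = {0}"
proof -
  obtain a where a: "W a = {0}" using W_bot by blast
  have "W k = {0}" if "k \<le> a" for k using W_mono[OF that] a W_zero by blast
  then show ?thesis by blast
qed

lemma W_high: "\<exists>b. \<forall>k\<ge>b. W k = UNIV"
proof -
  obtain b where b: "W b = UNIV" using W_top by blast
  have "W k = UNIV" if "b \<le> k" for k using W_mono[OF that] b by blast
  then show ?thesis by blast
qed

lemma F_low: "\<exists>a. \<forall>p\<le>a. F p = UNIV"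
proof -
  obtain a where a: "F a = UNIV" using F_top by blast
  have "F p = UNIV" if "p \<le> a" for p using F_anti[OF that] a by blast
  then show ?thesis by blast
qed

lemma F_high: "\<exists>b. \<forall>p\<ge>b. F p = {0}"
proof -
  obtain b where b: "F b = {0}" using F_bot by blast
  have "F p = {0}" if "b \<le> p" for p using F_anti[OF that] b F_zero by blast
  then show ?thesis by blast
qed

definition Rm :: "int \<Rightarrow> int \<Rightarrow> int \<Rightarrow> (complex ^ 'n) set" where
  "Rm p q m = vec.span (\<Union>{Fb (q - j) \<inter> W (p + q - j - 1) | j. j \<ge> m})"

abbreviation R :: "int \<Rightarrow> int \<Rightarrow> (complex ^ 'n) set" where
  "R p q \<equiv> Rm p q 1"

definition D :: "int \<Rightarrow> int \<Rightarrow> (complex ^ 'n) set" where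
  "D p q = F p \<inter> W (p + q) \<inter> set_plus (Fb q \<inter> W (p + q)) (R p q)"

lemma Rm_sub: "vec.subspace (Rm p q m)"
  unfolding Rm_def by (rule vec.subspace_span)

lemma Rm_zero: "0 \<in> Rm p q m"
  using Rm_sub vec.subspace_0 by blast

lemma Rm_mem: "m \<le> j \<Longrightarrow> Fb (q - j) \<inter> W (p + q - j - 1) \<subseteq> Rm p q m"
  unfolding Rm_def by (rule subset_trans[OF _ vec.span_superset]) blast

lemma Rm_W: "Rm p q m \<subseteq> W (p + q - m - 1)"
  unfolding Rm_def
proof (rule vec.span_minimal[OF _ W_sub])
  show "\<Union>{Fb (q - j) \<inter> W (p + q - j - 1) | j. j \<ge> m} \<subseteq> W (p + q - m - 1)"
  proof
    fix x assume "x \<in> \<Union>{Fb (q - j) \<inter> W (p + q - j - 1) | j. j \<ge> m}"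
    then obtain j where "j \<ge> m" "x \<in> W (p + q - j - 1)" by blast
    then show "x \<in> W (p + q - m - 1)" using W_mono[of "p + q - j - 1" "p + q - m - 1"] by auto
  qed
qed

lemma Rm_split: "Rm p q m \<subseteq> set_plus (Fb (q - m) \<inter> W (p + q - m - 1)) (Rm p q (m + 1))"
proof -
  let ?A = "Fb (q - m) \<inter> W (p + q - m - 1)"
  let ?B = "\<Union>{Fb (q - j) \<inter> W (p + q - j - 1) | j. j \<ge> m + 1}"
  have sA: "vec.subspace ?A" using Fb_sub W_sub vec.subspace_inter by blast
  have "\<Union>{Fb (q - j) \<inter> W (p + q - j - 1) | j. j \<ge> m} \<subseteq> ?A \<union> ?B"
  proof
    fix x assume "x \<in> \<Union>{Fb (q - j) \<inter> W (p + q - j - 1) | j. j \<ge> m}"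
    then obtain j where j: "j \<ge> m" "x \<in> Fb (q - j) \<inter> W (p + q - j - 1)" by auto
    show "x \<in> ?A \<union> ?B"
    proof (cases "j = m")
      case True then show ?thesis using j by simp
    next
      case False then have jm: "j \<ge> m + 1" using j by simp
      have "Fb (q - j) \<inter> W (p + q - j - 1) \<in> {Fb (q - j) \<inter> W (p + q - j - 1) | j. j \<ge> m + 1}"
        using jm by blast
      then have "x \<in> ?B" using j(2) by (rule UnionI)
      then show ?thesis by simp
    qed
  qed
  then have "Rm p q m \<subseteq> vec.span (?A \<union> ?B)" unfolding Rm_def by (rule vec.span_mono)
  also have "\<dots> = {x + y |x y. x \<in> vec.span ?A \<and> y \<in> vec.span ?B}" by (rule vec.span_Un)
  also have "\<dots> = set_plus ?A (Rm p q (m + 1))"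
  proof -
    have e: "vec.span ?A = ?A" by (rule vec.span_eq_iff[THEN iffD2, OF sA])
    show ?thesis unfolding set_plus_def Rm_def by (simp only: e)
  qed
  finally show ?thesis .
qed

lemma D_F: "D p q \<subseteq> F p" unfolding D_def by blast
lemma D_W: "D p q \<subseteq> W (p + q)" unfolding D_def by blast
lemma D_sub: "vec.subspace (D p q)"
  unfolding D_def
  by (intro vec.subspace_inter subspace_set_plus F_sub W_sub Fb_sub Rm_sub)
lemma D_zero: "0 \<in> D p q" using D_sub vec.subspace_0 by blast

lemma D_memI: "x \<in> F p \<Longrightarrow> x \<in> W (p + q) \<Longrightarrow> u \<in> Fb q \<Longrightarrow> u \<in> W (p + q) \<Longrightarrow> r \<in> R p q \<Longrightarrow> x = u + r
   \<Longrightarrow> x \<in> D p q"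
  unfolding D_def set_plus_def by blast

lemma D_memE: "x \<in> D p q \<Longrightarrow> (\<And>u r. x \<in> F p \<Longrightarrow> x \<in> W (p + q) \<Longrightarrow> u \<in> Fb q \<Longrightarrow> u \<in> W (p + q)
   \<Longrightarrow> r \<in> R p q \<Longrightarrow> x = u + r \<Longrightarrow> thesis) \<Longrightarrow> thesis"
  unfolding D_def set_plus_def by blast

text \<open>Descent lemma\<close>
lemma descent:
  assumes pq: "p + q = k" and x: "x \<in> W (k - 1)"
  shows "x \<in> set_plus (set_plus (F p \<inter> W (k - 1)) (Fb q \<inter> W k)) (R p q)"
proof -
  let ?S = "set_plus (set_plus (F p \<inter> W (k - 1)) (Fb q \<inter> W k)) (R p q)"
  have sS: "vec.subspace ?S"
    by (intro subspace_set_plus vec.subspace_inter F_sub W_sub Fb_sub Rm_sub)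
  have A: "F p \<inter> W (k - 1) \<subseteq> ?S"
  proof
    fix x assume "x \<in> F p \<inter> W (k - 1)"
    then have "(x + 0) + 0 \<in> ?S"
      by (intro set_plus_memI) (auto simp: Fb_zero W_zero Rm_zero)
    then show "x \<in> ?S" by simp
  qed
  have B: "Fb q \<inter> W k \<subseteq> ?S"
  proof
    fix x assume "x \<in> Fb q \<inter> W k"
    then have "(0 + x) + 0 \<in> ?S"
      by (intro set_plus_memI) (auto simp: F_zero W_zero Rm_zero)
    then show "x \<in> ?S" by simp
  qed
  have C: "R p q \<subseteq> ?S"
  proof
    fix x assume "x \<in> R p q"
    then have "(0 + 0) + x \<in> ?S"
      by (intro set_plus_memI) (auto simp: F_zero Fb_zero W_zero)
    then show "x \<in> ?S" by simp
  qed
  obtain a where a: "\<forall>k\<le>a. W k = {0}" using W_low by blast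
  have "l \<le> k - 1 \<longrightarrow> W l \<subseteq> ?S" for l
  proof (induction l rule: int_induct_from[where a=a])
    case (1 l) then show ?case using a vec.subspace_0[OF sS] by auto
  next
    case (2 l)
    show ?case
    proof (intro impI subsetI)
      fix y assume l: "l \<le> k - 1" and y: "y \<in> W l"
      obtain f g w where fgw: "f \<in> F p \<inter> W l" "g \<in> cconj ` F (l + 1 - p) \<inter> W l"
        "w \<in> W (l - 1)" "y = f + g + w"
        using hodge_sum[of p "l + 1 - p" l y] y by auto
      have f: "f \<in> ?S" using fgw(1) A W_mono[of l "k - 1"] l by blast
      have w: "w \<in> ?S" using fgw(3) 2 l by auto
      have g: "g \<in> ?S"
      proof (cases "l = k - 1")
        case True
        then have "g \<in> Fb q \<inter> W k" using fgw(2) pq W_mono[of l k] unfolding Fb_def by auto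
        then show ?thesis using B by blast
      next
        case False
        then have j: "1 \<le> k - 1 - l" using l by simp
        have "g \<in> Fb (q - (k - 1 - l)) \<inter> W (p + q - (k - 1 - l) - 1)"
          using fgw(2) pq unfolding Fb_def by (auto simp: algebra_simps)
        then show ?thesis using Rm_mem[OF j] C by blast
      qed
      show "y \<in> ?S" using f g w fgw(4) sS vec.subspace_add by metis
    qed
  qed
  then show ?thesis using x by blast
qed

text \<open>Injectivity\<close>
lemma D_inj:
  assumes pq: "p + q = k" and v: "v \<in> D p q" and vW: "v \<in> W (k - 1)"
  shows "v = 0"
proof -
  have vF: "v \<in> F p" using v D_F by blast
  have claim: "v \<in> W (k - 1 - int i) \<and> (\<exists>s r. s \<in> Fb (q - int i) \<inter> W (k - 1 - int i) \<and> r \<in> Rm p q (int i + 1) \<and> v = s + r)"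
    for i :: nat
  proof (induction i)
    case 0
    from v obtain u r where ur: "u \<in> Fb q" "u \<in> W (p + q)" "r \<in> R p q" "v = u + r"
      by (rule D_memE)
    have rW: "r \<in> W (k - 1)" using ur(3) Rm_W[of p q 1] W_mono[of "p + q - 1 - 1" "k - 1"] pq by auto
    have "u = v - r" using ur by simp
    then have "u \<in> W (k - 1)" using vW rW W_sub vec.subspace_diff by metis
    then show ?case using vW ur by auto
  next
    case (Suc i)
    let ?l = "k - 1 - int i"
    from Suc obtain s r where sr: "v \<in> W ?l" "s \<in> Fb (q - int i)" "s \<in> W ?l" "r \<in> Rm p q (int i + 1)" "v = s + r"
      by blast
    have rW: "r \<in> W (?l - 1)" using Rm_W[of p q "int i + 1"] sr(4) pq by (auto simp: algebra_simps)
    have "v - s \<in> W (?l - 1)" using sr rW by simp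
    then have vW': "v \<in> W (?l - 1)"
      using hodge_int[of p "q - int i" ?l v s] sr vF pq unfolding Fb_def by auto
    have sW': "s \<in> W (?l - 1)"
      using vW' rW sr(5) W_sub vec.subspace_diff by (metis add_diff_cancel_right')
    obtain w r' where wr: "w \<in> Fb (q - (int i + 1)) \<inter> W (p + q - (int i + 1) - 1)" "r' \<in> Rm p q (int i + 1 + 1)" "r = w + r'"
      using Rm_split[of p q "int i + 1"] sr(4) unfolding set_plus_def by blast
    have s1: "s \<in> Fb (q - (int i + 1))" using sr(2) Fb_anti[of "q - (int i + 1)" "q - int i"] by auto
    have wW: "w \<in> W (?l - 1)" using wr(1) pq by (auto simp: algebra_simps)
    have wF: "w \<in> Fb (q - (int i + 1))" using wr(1) by blast
    have "s + w \<in> Fb (q - (int i + 1))" by (rule vec.subspace_add[OF Fb_sub s1 wF])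
    moreover have "s + w \<in> W (?l - 1)" by (rule vec.subspace_add[OF W_sub sW' wW])
    ultimately have "s + w \<in> Fb (q - int (Suc i)) \<inter> W (k - 1 - int (Suc i))"
      by (simp add: algebra_simps)
    moreover have "r' \<in> Rm p q (int (Suc i) + 1)" using wr(2) by (simp add: algebra_simps)
    moreover have "v = (s + w) + r'" using sr(5) wr(3) by (simp add: algebra_simps)
    moreover have "v \<in> W (k - 1 - int (Suc i))" using vW' by (simp add: algebra_simps)
    ultimately show ?case by blast
  qed
  obtain a where a: "\<forall>k\<le>a. W k = {0}" using W_low by blast
  have "v \<in> W (k - 1 - int (nat (k - 1 - a)))" using claim by blast
  moreover have "k - 1 - int (nat (k - 1 - a)) \<le> a" by simp
  ultimately show ?thesis using a by blast
qed

end




context mhs begin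

lemma span_step:
  assumes x: "x \<in> F p \<inter> W k"
  shows "\<exists>d x1 f. d \<in> D p (k - p) \<and> x1 \<in> F (p + 1) \<inter> W k \<and> f \<in> F p \<inter> W (k - 1) \<and> x = d + x1 + f"
proof -
  let ?q = "k - p"
  obtain x1 y1 w where h: "x1 \<in> F (p + 1) \<inter> W k" "y1 \<in> cconj ` F ?q \<inter> W k" "w \<in> W (k - 1)" "x = x1 + y1 + w"
    using hodge_sum[of "p + 1" ?q k x] x by auto
  obtain f g r where fgr: "f \<in> F p \<inter> W (k - 1)" "g \<in> Fb ?q \<inter> W k" "r \<in> R p ?q" "w = f + g + r"
    using descent[of p ?q k w] h(3) unfolding set_plus_def by auto
  let ?d = "x - x1 - f"
  have x1F: "x1 \<in> F p" using h(1) F_anti[of p "p + 1"] by auto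
  have dF: "?d \<in> F p" using x x1F fgr(1) F_sub by (meson IntD1 vec.subspace_diff)
  have fW: "f \<in> W k" using fgr(1) W_mono[of "k - 1" k] by auto
  have dW: "?d \<in> W k" using x h(1) fW W_sub by (meson IntD1 IntD2 vec.subspace_diff)
  have yg: "y1 + g \<in> Fb ?q" using h(2) fgr(2) Fb_sub vec.subspace_add unfolding Fb_def by blast
  have ygW: "y1 + g \<in> W k" using h(2) fgr(2) W_sub vec.subspace_add by blast
  have deq: "?d = (y1 + g) + r" using h(4) fgr(4) by (simp add: algebra_simps)
  have "?d \<in> D p ?q"
    by (rule D_memI[of _ _ _ "y1 + g" r]) (use dF dW yg ygW fgr(3) deq in auto)
  moreover have "x = ?d + x1 + f" by simp
  ultimately show ?thesis using h(1) fgr(1) by blast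
qed

definition Sp :: "int \<Rightarrow> int \<Rightarrow> (complex ^ 'n) set" where
  "Sp p k = vec.span (\<Union>{D a b | a b. p \<le> a \<and> a + b \<le> k})"

lemma Sp_mono: assumes "p' \<le> p" "k \<le> k'" shows "Sp p k \<subseteq> Sp p' k'"
  unfolding Sp_def
proof (rule vec.span_mono, rule subsetI)
  fix x assume "x \<in> \<Union>{D a b | a b. p \<le> a \<and> a + b \<le> k}"
  then obtain a b where ab: "x \<in> D a b" "p \<le> a" "a + b \<le> k" by auto
  then have "p' \<le> a" "a + b \<le> k'" using assms by auto
  then show "x \<in> \<Union>{D a b | a b. p' \<le> a \<and> a + b \<le> k'}" using ab(1) by blast
qed

lemma D_Sp: "p \<le> a \<Longrightarrow> a + b \<le> k \<Longrightarrow> D a b \<subseteq> Sp p k"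
  unfolding Sp_def by (rule subset_trans[OF _ vec.span_superset]) blast

lemma FW_Sp: "F p \<inter> W k \<subseteq> Sp p k"
proof -
  obtain a where a: "\<forall>k\<le>a. W k = {0}" using W_low by blast
  obtain b where b: "\<forall>p\<ge>b. F p = {0}" using F_high by blast
  have "\<forall>p. F p \<inter> W k \<subseteq> Sp p k"
  proof (induction k rule: int_induct_from[where a=a])
    case (1 k)
    then show ?case using a by (auto simp: Sp_def vec.span_zero)
  next
    case (2 k)
    note outer = 2
    show ?case
    proof
      fix p
      show "F p \<inter> W k \<subseteq> Sp p k"
      proof (induction p rule: int_induct_down[where b=b])
        case (1 p)
        then show ?case using b by (auto simp: Sp_def vec.span_zero)
      next
        case (2 p)
        show ?case
        proof
          fix x assume x: "x \<in> F p \<inter> W k"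
          obtain d x1 f where dxf: "d \<in> D p (k - p)" "x1 \<in> F (p + 1) \<inter> W k" "f \<in> F p \<inter> W (k - 1)" "x = d + x1 + f"
            using span_step[OF x] by blast
          have "d \<in> Sp p k" using dxf(1) D_Sp[of p p "k - p" k] by auto
          moreover have "x1 \<in> Sp (p + 1) k" using dxf(2) 2 by blast
          then have "x1 \<in> Sp p k" using Sp_mono[of p "p + 1" k k] by auto
          moreover have "f \<in> Sp p (k - 1)" using dxf(3) outer by blast
          then have "f \<in> Sp p k" using Sp_mono[of p p "k - 1" k] by auto
          ultimately have "d + x1 + f \<in> Sp p k" unfolding Sp_def by (intro vec.span_add)
          then show "x \<in> Sp p k" using dxf(4) by simp
        qed
      qed
    qed
  qed
  then show ?thesis by blast
qed

lemma F_span: "F p = vec.span (\<Union>{D a b | a b. a \<ge> p})"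
proof
  obtain b where b: "\<forall>k\<ge>b. W k = UNIV" using W_high by blast
  show "F p \<subseteq> vec.span (\<Union>{D a b | a b. a \<ge> p})"
  proof
    fix x assume "x \<in> F p"
    then have "x \<in> Sp p b" using FW_Sp[of p b] b by auto
    moreover have "Sp p b \<subseteq> vec.span (\<Union>{D a b | a b. a \<ge> p})"
      unfolding Sp_def by (rule vec.span_mono) blast
    ultimately show "x \<in> vec.span (\<Union>{D a b | a b. a \<ge> p})" by blast
  qed
  show "vec.span (\<Union>{D a b | a b. a \<ge> p}) \<subseteq> F p"
    by (rule vec.span_minimal[OF _ F_sub]) (use D_F F_anti in blast)
qed

lemma W_span: "W k = vec.span (\<Union>{D a b | a b. a + b \<le> k})"
proof
  obtain a where a: "\<forall>p\<le>a. F p = UNIV" using F_low by blast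
  show "W k \<subseteq> vec.span (\<Union>{D a b | a b. a + b \<le> k})"
  proof
    fix x assume "x \<in> W k"
    then have "x \<in> Sp a k" using FW_Sp[of a k] a by auto
    moreover have "Sp a k \<subseteq> vec.span (\<Union>{D a b | a b. a + b \<le> k})"
      unfolding Sp_def by (rule vec.span_mono) blast
    ultimately show "x \<in> vec.span (\<Union>{D a b | a b. a + b \<le> k})" by blast
  qed
  show "vec.span (\<Union>{D a b | a b. a + b \<le> k}) \<subseteq> W k"
    by (rule vec.span_minimal[OF _ W_sub]) (use D_W W_mono in blast)
qed

lemma D_R:
  assumes "a < p" "b < q" shows "D a b \<subseteq> R p q"
proof
  fix x assume "x \<in> D a b"
  then obtain u r where ur: "u \<in> Fb b" "u \<in> W (a + b)" "r \<in> R a b" "x = u + r"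
    by (rule D_memE)
  have "u \<in> Fb (q - (q - b)) \<inter> W (p + q - (q - b) - 1)"
    using ur(1,2) W_mono[of "a + b" "p + q - (q - b) - 1"] assms by auto
  then have u: "u \<in> R p q" using Rm_mem[of 1 "q - b" q p] assms by auto
  have "R a b \<subseteq> R p q"
    unfolding Rm_def
  proof (rule vec.span_mono, rule subsetI)
    fix y assume "y \<in> \<Union>{Fb (b - j) \<inter> W (a + b - j - 1) | j. j \<ge> 1}"
    then obtain j where j: "j \<ge> 1" "y \<in> Fb (b - j) \<inter> W (a + b - j - 1)" by auto
    have "y \<in> Fb (q - (q - b + j)) \<inter> W (p + q - (q - b + j) - 1)"
      using j W_mono[of "a + b - j - 1" "p + q - (q - b + j) - 1"] assms by auto
    moreover have "1 \<le> q - b + j" using j assms by simp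
    ultimately show "y \<in> \<Union>{Fb (q - j) \<inter> W (p + q - j - 1) | j. j \<ge> 1}" by blast
  qed
  then have r: "r \<in> R p q" using ur(3) by blast
  show "x \<in> R p q" using u r ur(4) Rm_sub vec.subspace_add by metis
qed

end




context mhs begin

lemma indep:
  assumes "finite S" "\<And>i. i \<in> S \<Longrightarrow> c i \<in> D (fst i) (snd i)" "sum c S = 0" "i \<in> S"
  shows "c i = 0"
  using assms
proof (induction "card S" arbitrary: S i rule: less_induct)
  case less
  note fin = less.prems(1) and cD = less.prems(2) and s0 = less.prems(3) and iS = less.prems(4)
  define k where "k = Max ((\<lambda>i. fst i + snd i) ` S)"
  have Sne: "S \<noteq> {}" using iS by auto
  have k_in: "k \<in> (\<lambda>i. fst i + snd i) ` S" unfolding k_def using fin Sne by (intro Max_in) auto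
  have k_ge: "fst j + snd j \<le> k" if "j \<in> S" for j unfolding k_def using fin that by (intro Max_ge) auto
  define S' where "S' = {j \<in> S. fst j + snd j = k}"
  have S'fin: "finite S'" unfolding S'_def using fin by auto
  obtain jk where jk: "jk \<in> S" "k = fst jk + snd jk" using k_in by auto
  have "jk \<in> S'" unfolding S'_def using jk by simp
  then have S'ne: "S' \<noteq> {}" by auto
  define a where "a = Max (fst ` S')"
  have "a \<in> fst ` S'" unfolding a_def using S'fin S'ne by (intro Max_in) auto
  then obtain j0 where j0: "j0 \<in> S'" "fst j0 = a" by auto
  have a_ge: "fst j \<le> a" if "j \<in> S" "fst j + snd j = k" for j
    unfolding a_def using S'fin that by (intro Max_ge) (auto simp: S'_def)
  define m where "m = (a, k - a)"
  have m_eq: "m = j0" using j0 unfolding m_def S'_def by (cases j0) auto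
  have mS: "m \<in> S" using j0 m_eq unfolding S'_def by auto
  let ?T = "set_plus (Fb (k - a + 1) \<inter> W k) (W (k - 1))"
  have sT: "vec.subspace ?T" by (intro subspace_set_plus vec.subspace_inter Fb_sub W_sub)
  have others: "c j \<in> ?T" if jS: "j \<in> S - {m}" for j
  proof -
    have cj: "c j \<in> D (fst j) (snd j)" using cD jS by auto
    show ?thesis
    proof (cases "fst j + snd j < k")
      case True
      then have "c j \<in> W (k - 1)" using cj D_W W_mono[of "fst j + snd j" "k - 1"] by auto
      then have "0 + c j \<in> ?T" by (intro set_plus_memI) (auto simp: Fb_zero W_zero)
      then show ?thesis by simp
    next
      case False
      moreover have "fst j + snd j \<le> k" using k_ge jS by blast
      ultimately have jk: "fst j + snd j = k" by simp
      have "fst j \<noteq> a"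
      proof
        assume "fst j = a"
        then have "j = m" unfolding m_def using jk by (cases j) auto
        then show False using jS by auto
      qed
      then have ja: "fst j < a" using a_ge jS jk by force
      obtain u r where ur: "u \<in> Fb (snd j)" "u \<in> W (fst j + snd j)" "r \<in> R (fst j) (snd j)" "c j = u + r"
        using cj by (rule D_memE)
      have "u \<in> Fb (k - a + 1)" using ur(1) Fb_anti[of "k - a + 1" "snd j"] ja jk by auto
      moreover have "u \<in> W k" using ur(2) jk by simp
      moreover have "r \<in> W (k - 1)"
        using ur(3) Rm_W[of "fst j" "snd j" 1] W_mono[of "fst j + snd j - 1 - 1" "k - 1"] jk by auto
      ultimately have "u + r \<in> ?T" by (intro set_plus_memI) auto
      then show ?thesis using ur(4) by simp
    qed
  qed
  have rest: "sum c (S - {m}) \<in> ?T" by (rule vec.subspace_sum[OF sT]) (use others in auto)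
  have split: "sum c S = c m + sum c (S - {m})" using fin mS by (rule sum.remove)
  then have cm_eq: "c m = - sum c (S - {m})" using s0 by (simp add: eq_neg_iff_add_eq_0)
  have "c m \<in> ?T" using rest cm_eq vec.subspace_neg[OF sT] by simp
  then obtain g w where gw: "g \<in> Fb (k - a + 1) \<inter> W k" "w \<in> W (k - 1)" "c m = g + w"
    unfolding set_plus_def by blast
  have cmD: "c m \<in> D a (k - a)" using cD[OF mS] unfolding m_def by simp
  have cmFW: "c m \<in> F a \<inter> W k" using cmD D_F D_W by fastforce
  have "c m - g \<in> W (k - 1)" using gw by simp
  then have "c m \<in> W (k - 1)"
    using hodge_int[of a "k - a + 1" k "c m" g] cmFW gw(1) unfolding Fb_def by auto
  then have cm0: "c m = 0" using D_inj[of a "k - a" k "c m"] cmD by simp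
  show ?case
  proof (cases "i = m")
    case True then show ?thesis using cm0 by simp
  next
    case False
    have "sum c (S - {m}) = 0" using split s0 cm0 by simp
    moreover have "card (S - {m}) < card S" using fin mS by (rule card_Diff1_less)
    ultimately show ?thesis
      using less.hyps[of "S - {m}" i] fin cD iS False by auto
  qed
qed

lemma supp_fin: "finite (bigr_support D)"
proof -
  obtain a0 where a0: "\<forall>k\<le>a0. W k = {0}" using W_low by blast
  obtain bF where bF: "\<forall>p\<ge>bF. F p = {0}" using F_high by blast
  have "bigr_support D \<subseteq> {a0 - bF..bF} \<times> {a0 - bF..bF}"
  proof
    fix pq assume "pq \<in> bigr_support D"
    then obtain p q where pq: "pq = (p, q)" "D p q \<noteq> {0}" unfolding bigr_support_def by auto
    then obtain v where v: "v \<in> D p q" "v \<noteq> 0" using D_zero by blast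
    have p: "p < bF"
    proof (rule ccontr)
      assume "\<not> p < bF"
      then have "F p = {0}" using bF by auto
      then show False using v D_F by blast
    qed
    have k: "a0 < p + q"
    proof (rule ccontr)
      assume "\<not> a0 < p + q"
      then have "W (p + q) = {0}" using a0 by auto
      then show False using v D_W by blast
    qed
    have q: "q < bF"
    proof (rule ccontr)
      assume "\<not> q < bF"
      then have Fq: "F q = {0}" using bF by auto
      obtain u r where ur: "u \<in> Fb q" "r \<in> R p q" "v = u + r"
        using v(1) by (rule D_memE)
      have "u = 0" using ur(1) Fq by (simp add: mem_Fb)
      then have "v \<in> W (p + q - 1)"
        using ur Rm_W[of p q 1] W_mono[of "p + q - 1 - 1" "p + q - 1"] by auto
      then show False using D_inj[of p q "p + q" v] v by auto
    qed
    show "pq \<in> {a0 - bF..bF} \<times> {a0 - bF..bF}" using p q k pq(1) by auto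
  qed
  then show ?thesis by (rule finite_subset) simp
qed

lemma D_direct: "is_direct_bigrading D"
  unfolding is_direct_bigrading_def
proof (intro conjI allI)
  show "vec.subspace (D p q)" for p q by (rule D_sub)
  show "finite (bigr_support D)" by (rule supp_fin)
  fix v
  let ?U = "\<lambda>i. D (fst i) (snd i)"
  show "\<exists>!c. bigr_decomp D v c"
  proof (rule ex_ex1I)
    obtain bW where bW: "\<forall>k\<ge>bW. W k = UNIV" using W_high by blast
    have "v \<in> W bW" using bW by auto
    then have v1: "v \<in> vec.span (\<Union>{D a b | a b. a + b \<le> bW})" using W_span by blast
    have "\<Union>{D a b | a b. a + b \<le> bW} \<subseteq> vec.span (\<Union>(?U ` bigr_support D))"
    proof
      fix x assume "x \<in> \<Union>{D a b | a b. a + b \<le> bW}"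
      then obtain a' b' where x: "x \<in> D a' b'" by auto
      show "x \<in> vec.span (\<Union>(?U ` bigr_support D))"
      proof (cases "(a', b') \<in> bigr_support D")
        case True
        then have "x \<in> \<Union>(?U ` bigr_support D)" using x by force
        then show ?thesis by (rule vec.span_superset[THEN subsetD])
      next
        case False
        then have "x = 0" using x unfolding bigr_support_def by auto
        then show ?thesis by (simp add: vec.span_zero)
      qed
    qed
    then have "vec.span (\<Union>{D a b | a b. a + b \<le> bW}) \<subseteq> vec.span (\<Union>(?U ` bigr_support D))"
      by (rule vec.span_minimal[OF _ vec.subspace_span])
    then have "v \<in> vec.span (\<Union>(?U ` bigr_support D))" using v1 by blast
    then obtain c where c: "\<forall>i\<in>bigr_support D. c i \<in> ?U i" "v = sum c (bigr_support D)"
      using span_union_sum[OF supp_fin D_sub] by blast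
    let ?c = "\<lambda>i. if i \<in> bigr_support D then c i else 0"
    have "bigr_decomp D v ?c"
      unfolding bigr_decomp_def
    proof (intro conjI allI impI)
      show "?c (p, q) \<in> D p q" for p q using c(1) D_zero by auto
      show "pq \<notin> bigr_support D \<Longrightarrow> ?c pq = 0" for pq by simp
      show "v = sum ?c (bigr_support D)" using c(2) by simp
    qed
    then show "\<exists>c. bigr_decomp D v c" by blast
  next
    fix c1 c2 assume c1: "bigr_decomp D v c1" and c2: "bigr_decomp D v c2"
    let ?d = "\<lambda>i. c1 i - c2 i"
    have dD: "?d i \<in> D (fst i) (snd i)" for i
      using c1 c2 unfolding bigr_decomp_def by (cases i) (auto intro: vec.subspace_diff[OF D_sub])
    have "sum ?d (bigr_support D) = 0"
      using c1 c2 unfolding bigr_decomp_def by (simp add: sum_subtractf)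
    then have "?d i = 0" if "i \<in> bigr_support D" for i
      using indep[OF supp_fin, of ?d i] dD that by blast
    moreover have "c1 i = 0 \<and> c2 i = 0" if "i \<notin> bigr_support D" for i
      using c1 c2 that unfolding bigr_decomp_def by (cases i) auto
    ultimately show "c1 = c2" by (metis eq_iff_diff_eq_0 ext)
  qed
qed

end




context mhs begin

abbreviation pr :: "int \<Rightarrow> int \<Rightarrow> (complex ^ 'n) \<Rightarrow> (complex ^ 'n)" where
  "pr a b \<equiv> bigr_proj D a b"

lemma Sp_proj: "x \<in> Sp c m \<Longrightarrow> \<not> (c \<le> a \<and> a + b \<le> m) \<Longrightarrow> pr a b x = 0"
  unfolding Sp_def by (rule proj_span[OF D_direct])

lemma D_conj: "cconj ` D p q \<subseteq> set_plus (D q p) (vec.span (\<Union>{D r s | r s. r < q \<and> s < p}))"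
proof
  fix y assume "y \<in> cconj ` D p q"
  then obtain v where v: "v \<in> D p q" "y = cconj v" by auto
  let ?k = "p + q"
  obtain u r where ur: "u \<in> Fb q" "u \<in> W ?k" "r \<in> R p q" "v = u + r"
    using v(1) by (rule D_memE)
  have vF: "v \<in> F p" and vW: "v \<in> W ?k" using v(1) D_F D_W by blast+
  let ?L = "vec.span (\<Union>{D r s | r s. r < q \<and> s < p})"
  have cu: "cconj u \<in> Sp q ?k" using ur(1,2) FW_Sp[of q ?k] by (auto simp: mem_Fb W_conj_mem)
  have cr: "cconj r \<in> vec.span (\<Union>{D a b | a b. b < p})"
  proof -
    have "cconj ` R p q \<subseteq> vec.span (cconj ` \<Union>{Fb (q - j) \<inter> W (p + q - j - 1) | j. j \<ge> 1})"
      unfolding Rm_def by (rule cconj_span)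
    also have "\<dots> \<subseteq> vec.span (\<Union>{D a b | a b. b < p})"
    proof (rule vec.span_minimal[OF _ vec.subspace_span], rule subsetI)
      fix z assume "z \<in> cconj ` \<Union>{Fb (q - j) \<inter> W (p + q - j - 1) | j. j \<ge> 1}"
      then obtain j where j: "j \<ge> 1" "cconj z \<in> Fb (q - j) \<inter> W (p + q - j - 1)"
        by (auto simp: mem_cconj_image)
      have "z \<in> F (q - j) \<inter> W (p + q - j - 1)" using j(2) by (auto simp: mem_Fb W_conj_mem)
      then have z: "z \<in> Sp (q - j) (p + q - j - 1)" using FW_Sp by blast
      have "Sp (q - j) (p + q - j - 1) \<subseteq> vec.span (\<Union>{D a b | a b. b < p})"
        unfolding Sp_def
      proof (rule vec.span_mono, rule subsetI)
        fix x assume "x \<in> \<Union>{D a b | a b. q - j \<le> a \<and> a + b \<le> p + q - j - 1}"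
        then obtain a b where ab: "x \<in> D a b" "q - j \<le> a" "a + b \<le> p + q - j - 1" by auto
        then have "b < p" by simp
        then show "x \<in> \<Union>{D a b | a b. b < p}" using ab(1) by blast
      qed
      then show "z \<in> vec.span (\<Union>{D a b | a b. b < p})" using z by blast
    qed
    finally show ?thesis using ur(3) by blast
  qed
  have y_eq: "y = cconj u + cconj r" using v(2) ur(4) by simp
  let ?S = "bigr_support D"
  let ?lo = "?S \<inter> {i. fst i < q}"
  let ?hi = "?S - {i. fst i < q}"
  define ylo where "ylo = (\<Sum>i\<in>?lo. pr (fst i) (snd i) y)"
  define yhi where "yhi = (\<Sum>i\<in>?hi. pr (fst i) (snd i) y)"
  have y_split: "y = yhi + ylo"
    using proj_sum[OF D_direct, of y] sum.Int_Diff[OF supp_fin, of "\<lambda>i. pr (fst i) (snd i) y" "{i. fst i < q}"]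
    unfolding ylo_def yhi_def by (simp add: add.commute)
  have ylo: "ylo \<in> ?L"
    unfolding ylo_def
  proof (rule vec.span_sum)
    fix i assume i: "i \<in> ?lo"
    have "pr (fst i) (snd i) (cconj u) = 0" using Sp_proj[OF cu] i by auto
    then have e: "pr (fst i) (snd i) y = pr (fst i) (snd i) (cconj r)"
      using y_eq proj_add[OF D_direct] by simp
    show "pr (fst i) (snd i) y \<in> ?L"
    proof (cases "pr (fst i) (snd i) (cconj r) = 0")
      case True then show ?thesis using e by (simp add: vec.span_zero)
    next
      case False
      have "pr (fst i) (snd i) (cconj r) = 0" if "\<not> snd i < p"
        using proj_span[OF D_direct, where P="\<lambda>a b. b < p", OF cr] that by simp
      then have "snd i < p" using False by blast
      moreover have "pr (fst i) (snd i) y \<in> D (fst i) (snd i)" by (rule proj_mem[OF D_direct])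
      ultimately have "pr (fst i) (snd i) y \<in> \<Union>{D r s | r s. r < q \<and> s < p}" using i by blast
      then show ?thesis by (rule vec.span_superset[THEN subsetD])
    qed
  qed
  have yhiF: "yhi \<in> F q"
    unfolding yhi_def
  proof (rule vec.subspace_sum[OF F_sub])
    fix i assume i: "i \<in> ?hi"
    have "pr (fst i) (snd i) y \<in> F (fst i)" using proj_mem[OF D_direct] D_F by blast
    then show "pr (fst i) (snd i) y \<in> F q" using F_anti[of q "fst i"] i by auto
  qed
  have LW: "?L \<subseteq> W ?k"
  proof (rule vec.span_minimal[OF _ W_sub], rule subsetI)
    fix x assume "x \<in> \<Union>{D r s | r s. r < q \<and> s < p}"
    then obtain r s where "x \<in> D r s" "r < q" "s < p" by auto
    then show "x \<in> W ?k" using D_W W_mono[of "r + s" ?k] by auto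
  qed
  have LR: "?L \<subseteq> R q p"
  proof (rule vec.span_minimal[OF _ Rm_sub], rule subsetI)
    fix x assume "x \<in> \<Union>{D r s | r s. r < q \<and> s < p}"
    then obtain r s where "x \<in> D r s" "r < q" "s < p" by auto
    then show "x \<in> R q p" using D_R by blast
  qed
  have yW: "y \<in> W ?k" using v(2) vW by (simp add: W_conj_mem)
  have yFb: "y \<in> Fb p" using v(2) vF by (simp add: mem_Fb)
  have yhi_eq: "yhi = y + (- ylo)" using y_split by simp
  have yloW: "ylo \<in> W ?k" using ylo LW by blast
  have "y + (- ylo) \<in> W ?k" by (rule vec.subspace_add[OF W_sub yW vec.subspace_neg[OF W_sub yloW]])
  then have yhiW: "yhi \<in> W (q + p)" using yhi_eq by (simp add: add.commute)
  have nylo: "- ylo \<in> R q p" using ylo LR Rm_sub vec.subspace_neg by blast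
  have "yhi \<in> D q p"
    by (rule D_memI[OF yhiF yhiW _ _ nylo yhi_eq]) (use yFb yW in \<open>auto simp: add.commute\<close>)
  then show "y \<in> set_plus (D q p) ?L" using y_split ylo by (simp add: set_plus_memI)
qed

lemma D_deligne: "is_deligne_bigrading F W D"
  unfolding is_deligne_bigrading_def using D_direct F_span W_span D_conj by blast

lemma deligne_sub:
  assumes I: "is_deligne_bigrading F W I"
  shows "I p q \<subseteq> D p q"
proof
  fix v assume v: "v \<in> I p q"
  have FI: "F a = vec.span (\<Union>{I a' b' | a' b'. a' \<ge> a})" for a using I unfolding is_deligne_bigrading_def by blast
  have WI: "W k = vec.span (\<Union>{I a' b' | a' b'. a' + b' \<le> k})" for k using I unfolding is_deligne_bigrading_def by blast
  have cI: "cconj ` I a b \<subseteq> set_plus (I b a) (vec.span (\<Union>{I r s | r s. r < b \<and> s < a}))" for a b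
    using I unfolding is_deligne_bigrading_def by blast
  have IF: "I a b \<subseteq> F a" for a b
  proof
    fix x assume "x \<in> I a b"
    then have "x \<in> \<Union>{I a' b' | a' b'. a' \<ge> a}" by blast
    then show "x \<in> F a" unfolding FI[of a] by (rule vec.span_superset[THEN subsetD])
  qed
  have IW: "I a b \<subseteq> W (a + b)" for a b
  proof
    fix x assume "x \<in> I a b"
    then have "x \<in> \<Union>{I a' b' | a' b'. a' + b' \<le> a + b}" by blast
    then show "x \<in> W (a + b)" unfolding WI[of "a + b"] by (rule vec.span_superset[THEN subsetD])
  qed
  obtain y e where ye: "y \<in> I q p" "e \<in> vec.span (\<Union>{I r s | r s. r < q \<and> s < p})" "cconj v = y + e"
    using cI[of p q] v unfolding set_plus_def by blast
  have veq: "v = cconj y + cconj e" using arg_cong[OF ye(3), of cconj] by simp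
  have cyF: "cconj y \<in> Fb q" using ye(1) IF by (auto simp: mem_Fb)
  have cyW: "cconj y \<in> W (p + q)" using ye(1) IW[of q p] by (auto simp: W_conj_mem add.commute)
  have "cconj ` vec.span (\<Union>{I r s | r s. r < q \<and> s < p}) \<subseteq> vec.span (cconj ` \<Union>{I r s | r s. r < q \<and> s < p})"
    by (rule cconj_span)
  also have "\<dots> \<subseteq> R p q"
  proof (rule vec.span_minimal[OF _ Rm_sub], rule subsetI)
    fix z assume "z \<in> cconj ` \<Union>{I r s | r s. r < q \<and> s < p}"
    then obtain r s where rs: "cconj z \<in> I r s" "r < q" "s < p" by (auto simp: mem_cconj_image)
    have "z \<in> Fb r" using rs(1) IF by (auto simp: mem_Fb)
    moreover have "cconj z \<in> W (r + s)" using rs(1) IW by blast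
    then have "z \<in> W (r + s)" by (simp add: W_conj_mem)
    then have "z \<in> W (p + q - (q - r) - 1)" using W_mono[of "r + s" "p + q - (q - r) - 1"] rs by auto
    ultimately have "z \<in> Fb (q - (q - r)) \<inter> W (p + q - (q - r) - 1)" by simp
    then show "z \<in> R p q" using Rm_mem[of 1 "q - r" q p] rs by auto
  qed
  finally have ceR: "cconj e \<in> R p q" using ye(2) by blast
  show "v \<in> D p q"
    by (rule D_memI[OF _ _ cyF cyW ceR veq]) (use v IF IW in blast)+
qed

lemma deligne_unique:
  assumes I: "is_deligne_bigrading F W I"
  shows "I = D"
proof (intro ext equalityI)
  fix p q
  show "I p q \<subseteq> D p q" by (rule deligne_sub[OF I])
  have dirI: "is_direct_bigrading I" using I unfolding is_deligne_bigrading_def by blast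
  show "D p q \<subseteq> I p q"
  proof
    fix v assume v: "v \<in> D p q"
    let ?pI = "\<lambda>i. bigr_proj I (fst i) (snd i) v"
    have pID: "?pI i \<in> D (fst i) (snd i)" for i
      using proj_mem[OF dirI] deligne_sub[OF I] by blast
    have zero: "bigr_proj I a b v = 0" if ab: "(a, b) \<noteq> (p, q)" for a b
    proof -
      have "pr a b v = 0" using proj_self[OF D_direct v, of a b] ab by auto
      moreover have "pr a b v = (\<Sum>i\<in>bigr_support I. pr a b (?pI i))"
        by (subst proj_sum[OF dirI, of v]) (rule proj_sum_lin[OF D_direct])
      moreover have "pr a b (?pI i) = (if i = (a, b) then ?pI i else 0)" for i
        using proj_self[OF D_direct pID[of i], of a b] by (cases i) auto
      ultimately have "0 = (\<Sum>i\<in>bigr_support I. if i = (a, b) then ?pI i else 0)" by simp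
      also have "\<dots> = (if (a, b) \<in> bigr_support I then bigr_proj I a b v else 0)"
        using fin_supp[OF dirI] by (simp add: sum.delta')
      finally show ?thesis using proj_outside[OF dirI, of a b v] by (auto split: if_splits)
    qed
    have "v \<in> vec.span (\<Union>{I a b | a b. (a, b) = (p, q)})"
      by (rule span_from_proj[OF dirI]) (use zero in blast)
    moreover have "vec.span (I p q) = I p q" by (rule vec.span_eq_iff[THEN iffD2, OF I_sub[OF dirI]])
    ultimately show "v \<in> I p q" by simp
  qed
qed

lemma deligne_I_eq: "deligne_I F W = D"
  unfolding deligne_I_def
  by (rule the_equality[where a=D]) (auto intro: D_deligne dest: deligne_unique)

end




context mhs begin

lemma conj_Sp:
  assumes "m - c = d"
  shows "cconj ` Sp c m \<subseteq> vec.span (\<Union>{D a b | a b. a < d \<or> (a = d \<and> b = c)})"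
proof -
  let ?T = "vec.span (\<Union>{D a b | a b. a < d \<or> (a = d \<and> b = c)})"
  have "cconj ` Sp c m \<subseteq> vec.span (cconj ` \<Union>{D a b | a b. c \<le> a \<and> a + b \<le> m})"
    unfolding Sp_def by (rule cconj_span)
  also have "\<dots> \<subseteq> ?T"
  proof (rule vec.span_minimal[OF _ vec.subspace_span], rule subsetI)
    fix z assume "z \<in> cconj ` \<Union>{D a b | a b. c \<le> a \<and> a + b \<le> m}"
    then obtain a b z0 where ab: "z0 \<in> D a b" "c \<le> a" "a + b \<le> m" "z = cconj z0" by blast
    have z: "z \<in> set_plus (D b a) (vec.span (\<Union>{D r s | r s. r < b \<and> s < a}))"
      using D_conj[of a b] ab by blast
    have "D b a \<subseteq> ?T"
    proof (cases "b < d")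
      case True
      then have "D b a \<subseteq> \<Union>{D a b | a b. a < d \<or> (a = d \<and> b = c)}" by blast
      then show ?thesis using vec.span_superset by blast
    next
      case False
      then have "b = d" "a = c" using ab assms by auto
      then have "D b a \<subseteq> \<Union>{D a b | a b. a < d \<or> (a = d \<and> b = c)}" by blast
      then show ?thesis using vec.span_superset by blast
    qed
    moreover have "vec.span (\<Union>{D r s | r s. r < b \<and> s < a}) \<subseteq> ?T"
    proof (rule vec.span_mono, rule subsetI)
      fix x assume "x \<in> \<Union>{D r s | r s. r < b \<and> s < a}"
      then obtain r s where rs: "x \<in> D r s" "r < b" by auto
      then have "r < d" using ab assms by simp
      then show "x \<in> \<Union>{D a b | a b. a < d \<or> (a = d \<and> b = c)}" using rs(1) by blast
    qed
    ultimately have "set_plus (D b a) (vec.span (\<Union>{D r s | r s. r < b \<and> s < a})) \<subseteq> ?T"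
      by (rule set_plus_sub_span)
    then show "z \<in> ?T" using z by (rule subsetD)
  qed
  finally show ?thesis .
qed

lemma N_comp:
  fixes N :: "complex ^ 'n ^ 'n"
  assumes NW: "\<And>k x. x \<in> W k \<Longrightarrow> N *v x \<in> W k"
    and NF: "\<And>p x. x \<in> F p \<Longrightarrow> N *v x \<in> F (p - 1)"
    and NR: "\<And>x. cconj (N *v x) = N *v cconj x"
    and x: "x \<in> D p q"
    and ex: "r < -1 \<or> r + s > 0 \<or> (r \<ge> 1 \<and> \<not> (r = 1 \<and> s = -1))"
  shows "pr (p + r) (q + s) (N *v x) = 0"
proof -
  let ?k = "p + q"
  have NxF: "N *v x \<in> F (p - 1)" using x D_F NF by blast
  have NxW: "N *v x \<in> W ?k" using x D_W NW by blast
  have NxSp: "N *v x \<in> Sp (p - 1) ?k" using NxF NxW FW_Sp by blast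
  let ?T = "vec.span (\<Union>{D a b | a b. a < p + 1 \<or> (a = p + 1 \<and> b = q - 1)})"
  have sT: "vec.subspace ?T" by (rule vec.subspace_span)
  have NT: "N *v x \<in> ?T"
  proof -
    obtain y e where ye: "y \<in> D q p" "e \<in> vec.span (\<Union>{D r s | r s. r < q \<and> s < p})" "cconj x = y + e"
      using D_conj[of p q] x unfolding set_plus_def by blast
    have xeq: "x = cconj y + cconj e" using arg_cong[OF ye(3), of cconj] by simp
    have Nx: "N *v x = cconj (N *v y) + cconj (N *v e)"
      using xeq by (simp add: NR matrix_vector_right_distrib)
    have "N *v y \<in> Sp (q - 1) (p + q)"
      using ye(1) D_F D_W NF NW FW_Sp[of "q - 1" "p + q"] by (fastforce simp: add.commute)
    then have t1: "cconj (N *v y) \<in> ?T" using conj_Sp[of "p + q" "q - 1" "p + 1"] by auto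
    have t2: "cconj (N *v e) \<in> ?T"
    proof (rule vec.span_induct[where P="\<lambda>e. cconj (N *v e) \<in> ?T", OF ye(2)])
      show "vec.subspace {e. cconj (N *v e) \<in> ?T}"
        unfolding vec.subspace_def
        by (auto simp: matrix_vector_right_distrib vec.linear_scale[OF vec.linear_axioms]
                 intro: vec.span_add vec.span_scale vec.span_zero)
      fix z assume "z \<in> \<Union>{D r s | r s. r < q \<and> s < p}"
      then obtain r' s' where z: "z \<in> D r' s'" "r' < q" "s' < p" by auto
      have "N *v z \<in> Sp (r' - 1) (r' + s')"
        using z(1) D_F D_W NF NW FW_Sp[of "r' - 1" "r' + s'"] by fastforce
      then have "cconj (N *v z) \<in> vec.span (\<Union>{D a b | a b. a < s' + 1 \<or> (a = s' + 1 \<and> b = r' - 1)})"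
        using conj_Sp[of "r' + s'" "r' - 1" "s' + 1"] by auto
      moreover have "vec.span (\<Union>{D a b | a b. a < s' + 1 \<or> (a = s' + 1 \<and> b = r' - 1)}) \<subseteq> ?T"
      proof (rule vec.span_mono, rule subsetI)
        fix w assume "w \<in> \<Union>{D a b | a b. a < s' + 1 \<or> (a = s' + 1 \<and> b = r' - 1)}"
        then obtain a b where ab: "w \<in> D a b" "a < s' + 1 \<or> (a = s' + 1 \<and> b = r' - 1)" by auto
        then have "a < p + 1" using z by auto
        then show "w \<in> \<Union>{D a b | a b. a < p + 1 \<or> (a = p + 1 \<and> b = q - 1)}" using ab(1) by blast
      qed
      ultimately show "cconj (N *v z) \<in> ?T" by blast
    qed
    show ?thesis using Nx t1 t2 by (simp add: vec.span_add)
  qed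
  show ?thesis
  proof (cases "r < -1 \<or> r + s > 0")
    case True
    then show ?thesis using Sp_proj[OF NxSp] by auto
  next
    case False
    then have "\<not> (p + r < p + 1 \<or> (p + r = p + 1 \<and> q + s = q - 1))" using ex by auto
    then show ?thesis
      using proj_span[OF D_direct, where P="\<lambda>a b. a < p + 1 \<or> (a = p + 1 \<and> b = q - 1)", OF NT] by simp
  qed
qed

lemma hodge_zero:
  fixes N :: "complex ^ 'n ^ 'n"
  assumes NW: "\<And>k x. x \<in> W k \<Longrightarrow> N *v x \<in> W k"
    and NF: "\<And>p x. x \<in> F p \<Longrightarrow> N *v x \<in> F (p - 1)"
    and NR: "\<And>x. cconj (N *v x) = N *v cconj x"
    and ex: "r < -1 \<or> r + s > 0 \<or> (r \<ge> 1 \<and> \<not> (r = 1 \<and> s = -1))"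
  shows "hodge_component F W N r s = (\<lambda>v. 0)"
proof
  fix v
  have "(\<Sum>pq\<in>bigr_support D. pr (fst pq + r) (snd pq + s) (N *v pr (fst pq) (snd pq) v)) = 0"
  proof (rule sum.neutral, rule ballI)
    fix pq
    show "pr (fst pq + r) (snd pq + s) (N *v pr (fst pq) (snd pq) v) = 0"
      by (rule N_comp[OF NW NF NR proj_mem[OF D_direct] ex])
  qed
  then show "hodge_component F W N r s v = 0"
    unfolding hodge_component_def deligne_I_eq Let_def by simp
qed

end

lemma excluded_arith:
  fixes r s :: int
  assumes "\<not> ((r, s) = (-1, 1) \<or> (r, s) = (0, 0) \<or> (r, s) = (1, -1)
                 \<or> (\<exists>k>0. (r, s) = (-1, 1 - k)) \<or> (\<exists>k>0. (r, s) = (0, -k)))"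
  shows "r < -1 \<or> r + s > 0 \<or> (r \<ge> 1 \<and> \<not> (r = 1 \<and> s = -1))"
proof (rule ccontr)
  assume c: "\<not> ?thesis"
  then have r: "r = -1 \<or> r = 0 \<or> (r = 1 \<and> s = -1)" and rs: "r + s \<le> 0" by auto
  show False
  proof (cases "r = -1")
    case True
    show False
    proof (cases "s = 1")
      case True then show False using assms \<open>r = -1\<close> by simp
    next
      case False
      then have "1 - s > 0" "(r, s) = (-1, 1 - (1 - s))" using rs \<open>r = -1\<close> by auto
      then show False using assms by blast
    qed
  next
    case False
    show False
    proof (cases "r = 0")
      case True
      show False
      proof (cases "s = 0")
        case True then show False using assms \<open>r = 0\<close> by simp
      next
        case False
        then have "- s > 0" "(r, s) = (0, - (- s))" using rs \<open>r = 0\<close> by auto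
        then show False using assms by blast
      qed
    next
      case False
      then show False using r assms \<open>r \<noteq> -1\<close> by auto
    qed
  qed
qed




theorem lemma6p31:
  fixes W :: "int \<Rightarrow> (complex ^ 'n) set"
    and Q :: "int \<Rightarrow> complex ^ 'n \<Rightarrow> complex ^ 'n \<Rightarrow> complex"
    and d :: "int \<Rightarrow> nat"
    and F :: "int \<Rightarrow> (complex ^ 'n) set"
    and N :: "complex ^ 'n ^ 'n"
    and z :: complex
  assumes W: "rational_incr_filtration W"
    and Q: "graded_forms W Q"
    and orbit: "nilpotent_orbit_data W Q d F N"
    and inM: "nexp (cscale z N) \<cdot> F \<in> Mcal W Q d"
  shows "\<forall>r s. \<not> ((r, s) = (-1, 1) \<or> (r, s) = (0, 0) \<or> (r, s) = (1, -1)
                 \<or> (\<exists>k>0. (r, s) = (-1, 1 - k)) \<or> (\<exists>k>0. (r, s) = (0, -k)))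
           \<longrightarrow> hodge_component (nexp (cscale z N) \<cdot> F) W N r s = (\<lambda>v. 0)"
proof (intro allI impI)
  fix r s :: int
  assume exc: "\<not> ((r, s) = (-1, 1) \<or> (r, s) = (0, 0) \<or> (r, s) = (1, -1)
                 \<or> (\<exists>k>0. (r, s) = (-1, 1 - k)) \<or> (\<exists>k>0. (r, s) = (0, -k)))"
  define E where "E = nexp (cscale z N)"
  define F' where "F' = E \<cdot> F"
  have F'p: "F' p = (*v) E ` F p" for p unfolding F'_def act_def by simp
  have MHS: "is_MHS F' W" using inM unfolding F'_def E_def Mcal_def graded_polarized_MHS_def by blast
  have decr: "decr_filtration F'" and hs: "\<And>k p. set_plus (grF F' W k p) (cconj ` grF F' W k (k - p + 1)) = W k"
    and hi: "\<And>k p. grF F' W k p \<inter> cconj ` grF F' W k (k - p + 1) = W (k - 1)"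
    using MHS unfolding is_MHS_def by auto
  have incr: "incr_filtration W" and rat: "\<And>k. rational_subspace (W k)"
    using W unfolding rational_incr_filtration_def by auto
  have Wc: "cconj ` W k = W k" for k using rat cconj_rational_subspace by blast
  have Wc_mem: "cconj x \<in> W k \<longleftrightarrow> x \<in> W k" for x k using Wc[of k] by (metis mem_cconj_image)
  have Wsub: "vec.subspace (W k)" for k using incr unfolding incr_filtration_def by auto
  have M: "mhs F' W"
  proof (unfold_locales)
    show "\<And>p. vec.subspace (F' p)" using decr unfolding decr_filtration_def by auto
    show "\<And>p. F' (p + 1) \<subseteq> F' p" using decr unfolding decr_filtration_def by auto
    show "\<exists>a. F' a = UNIV" using decr unfolding decr_filtration_def by auto
    show "\<exists>b. F' b = {0}" using decr unfolding decr_filtration_def by auto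
    show "\<And>k. vec.subspace (W k)" by (rule Wsub)
    show "\<And>k. W k \<subseteq> W (k + 1)" using incr unfolding incr_filtration_def by auto
    show "\<exists>a. W a = {0}" using incr unfolding incr_filtration_def by auto
    show "\<exists>b. W b = UNIV" using incr unfolding incr_filtration_def by auto
    show "\<And>k. cconj ` W k = W k" by (rule Wc)
  next
    fix p q k x
    assume pq: "p + q = k + 1" and x: "x \<in> W k"
    have qe: "q = k - p + 1" using pq by simp
    obtain a b where ab: "a \<in> grF F' W k p" "b \<in> cconj ` grF F' W k q" "x = a + b"
      using hs[of k p] x qe unfolding set_plus_def by blast
    obtain f w1 where fw1: "f \<in> F' p \<inter> W k" "w1 \<in> W (k - 1)" "a = f + w1"
      using ab(1) unfolding grF_def set_plus_def by blast
    have "cconj b \<in> grF F' W k q" using ab(2) by (simp add: mem_cconj_image)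
    then obtain g0 w2 where gw2: "g0 \<in> F' q \<inter> W k" "w2 \<in> W (k - 1)" "cconj b = g0 + w2"
      unfolding grF_def set_plus_def by blast
    have beq: "b = cconj g0 + cconj w2" using arg_cong[OF gw2(3), of cconj] by simp
    have g: "cconj g0 \<in> cconj ` F' q \<inter> W k" using gw2(1) Wc_mem by auto
    have w: "w1 + cconj w2 \<in> W (k - 1)" using fw1(2) gw2(2) Wc_mem Wsub vec.subspace_add by blast
    have "x = f + cconj g0 + (w1 + cconj w2)" using ab(3) fw1(3) beq by (simp add: algebra_simps)
    then show "\<exists>f g w. f \<in> F' p \<inter> W k \<and> g \<in> cconj ` F' q \<inter> W k \<and> w \<in> W (k - 1) \<and> x = f + g + w"
      using fw1(1) g w by blast
  next
    fix p q k x y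
    assume pq: "p + q = k + 1" and x: "x \<in> F' p \<inter> W k" and y: "y \<in> cconj ` F' q \<inter> W k"
      and xy: "x - y \<in> W (k - 1)"
    have qe: "q = k - p + 1" using pq by simp
    have "x + 0 \<in> grF F' W k p" unfolding grF_def
      by (rule set_plus_memI) (use x Wsub vec.subspace_0 in auto)
    then have x1: "x \<in> grF F' W k p" by simp
    have c1: "cconj y \<in> F' q \<inter> W k" using y Wc_mem by (auto simp: mem_cconj_image)
    have c2: "cconj (x - y) \<in> W (k - 1)" using xy Wc_mem by blast
    have "cconj y + cconj (x - y) \<in> grF F' W k q" unfolding grF_def
      by (rule set_plus_memI[OF c1 c2])
    then have "cconj x \<in> grF F' W k q" by simp
    then have x2: "x \<in> cconj ` grF F' W k q" by (simp add: mem_cconj_image)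
    show "x \<in> W (k - 1)" using hi[of k p] x1 x2 qe by blast
  qed
  have NgR: "N \<in> gR W Q" and NFo: "\<And>p. (*v) N ` F p \<subseteq> F (p - 1)"
    using orbit unfolding nilpotent_orbit_data_def by auto
  have NW: "N *v x \<in> W k" if "x \<in> W k" for k x
    using NgR that unfolding gR_def gC_def by blast
  have NR: "cconj (N *v x) = N *v cconj x" for x
    using NgR unfolding gR_def by (auto intro: real_end_cconj)
  have comm: "N ** E = E ** N" using commutes_nexp[of N z] unfolding commutes_def E_def .
  have NF: "N *v x \<in> F' (p - 1)" if xF: "x \<in> F' p" for p x
  proof -
    obtain x0 where x0: "x0 \<in> F p" "x = E *v x0" using xF F'p by auto
    have "N *v x = E *v (N *v x0)" using x0(2) comm by (simp add: matrix_vector_mul_assoc)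
    moreover have "N *v x0 \<in> F (p - 1)" using NFo x0(1) by blast
    ultimately show ?thesis using F'p by auto
  qed
  have "hodge_component F' W N r s = (\<lambda>v. 0)"
    by (rule mhs.hodge_zero[OF M NW NF NR excluded_arith[OF exc]])
  then show "hodge_component (nexp (cscale z N) \<cdot> F) W N r s = (\<lambda>v. 0)"
    unfolding F'_def E_def .
qed



end
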